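(* Let $H_1,H_2$ be Hopf algebras over $\mathbb{C}$ forming a matched pair, with left action $\triangleright:H_2\otimes H_1\to H_1$ and right action $\triangleleft:H_2\otimes H_1\to H_2$, and let $H=H_1\bowtie H_2$ be the associated double cross product Hopf algebra. Let $H_1'$ be a Hopf algebra nondegenerately dually paired with $H_1$ by $\langle\ ,\ \rangle$, and assume that the right action $\triangleleft$ of $H_1$ on $H_2$ is dual to a left coaction $a\mapsto a_{(0)}\otimes a_{(1)}\in H_1'\otimes H_2$, i.e. $a\triangleleft h=\langle a_{(0)},h\rangle a_{(1)}$ for all $a\in H_2$, $h\in H_1$, so that the bicrossproduct Hopf algebra $H_2{\triangleright\!\!\!\blacktriangleleft} H_1'$ is defined. Consider the two algebras built on the vector space $H_1\otimes H_2\otimes H_1'$: (i) $A_1=(H_1\bowtie H_2){\triangleright\!\!\!<} H_1'$, the cross product of $H_1\bowtie H_2$ by its right action on $H_1'$ given by $\phi\triangleleft(h\otimes a)=\langle\phi_{(1)},h\rangle\,\phi_{(2)}\triangleleft a$, where $\langle\phi\triangleleft a,h\rangle=\langle\phi,a\triangleright h\rangle$; its product is $(x\otimes\phi)(y\otimes\psi)=xy_{(1)}\otimes(\phi\triangleleft y_{(2)})\psi$ for $x,y\in H_1\bowtie H_2$, $\phi,\psi\in H_1'$; (ii) $A_2=H_1{>\!\!\!\triangleleft}(H_2{\triangleright\!\!\!\blacktriangleleft} H_1')$, the cross product of $H_2{\triangleright\!\!\!\blacktriangleleft} H_1'$ by its left action on $H_1$ given by $(a\otimes\phi)\triangleright h=(a\triangleright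 h_{(1)})\langle\phi,h_{(2)}\rangle$; its product is $(h\otimes X)(g\otimes Y)=h(X_{(1)}\triangleright g)\otimes X_{(2)}Y$ for $h,g\in H_1$, $X,Y\in H_2{\triangleright\!\!\!\blacktriangleleft} H_1'$. Then the products of $A_1$ and $A_2$ on $H_1\otimes H_2\otimes H_1'$ coincide, so there is a single algebra $A=(H_1\bowtie H_2){\triangleright\!\!\!<} H_1'=H_1{>\!\!\!\triangleleft}(H_2{\triangleright\!\!\!\blacktriangleleft} H_1')$. It contains $H_1\bowtie H_2$ (as the elements $h\otimes a\otimes 1$) and $H_2{\triangleright\!\!\!\blacktriangleleft} H_1'$ (as the elements $1\otimes a\otimes\phi$) as subalgebras, and it also contains the Heisenberg–Weyl algebra $H_1{\triangleright\!\!\!<} H_1'=H_1{>\!\!\!\triangleleft} H_1'$ (the elements $h\otimes 1\otimes\phi$, with product $(h\otimes\phi)(g\otimes\psi)=hg_{(1)}\otimes\langle\phi_{(1)},g_{(2)}\rangle\phi_{(2)}\psi$).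
   Context: Sweedler notation $\Delta h=h_{(1)}\otimes h_{(2)}$ is used. A matched pair means the actions satisfy the conditions making the following a Hopf algebra: the double cross product $H_1\bowtie H_2$ is the vector space $H_1\otimes H_2$ with product $(h\otimes a)(g\otimes b)=h(a_{(1)}\triangleright g_{(1)})\otimes(a_{(2)}\triangleleft g_{(2)})b$, tensor product coproduct, and $H_1,H_2$ embedded as subalgebras $h\otimes1$, $1\otimes a$. The bicrossproduct $H_2{\triangleright\!\!\!\blacktriangleleft} H_1'$ is the vector space $H_2\otimes H_1'$ with product $(a\otimes\phi)(b\otimes\psi)=ab_{(1)}\otimes(\phi\triangleleft b_{(2)})\psi$ and coproduct $\Delta(a\otimes\phi)=(a_{(1)}\otimes a_{(2)(0)}\phi_{(1)})\otimes(a_{(2)(1)}\otimes\phi_{(2)})$, where $\phi\triangleleft b$ is the right action of $H_2$ on $H_1'$ defined by $\langle\phi\triangleleft b,h\rangle=\langle\phi,b\triangleright h\rangle$. *)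

theory Defs
  imports Complex_Main "HOL-Library.Poly_Mapping"
begin

text \<open>A complex vector space is represented by a basis index type 'i: its elements are the
finitely supported coefficient functions 'i \<Rightarrow>0 complex.  The tensor product of the spaces
with bases 'i and 'j is the space with basis 'i \<times> 'j.  Linear and bilinear maps are given on
basis vectors and extended linearly.\<close>

type_synonym 'i vec = "'i \<Rightarrow>\<^sub>0 complex"

definition bv :: "'i \<Rightarrow> 'i vec" where
  "bv i = Poly_Mapping.single i 1"

definition vsc :: "complex \<Rightarrow> 'i vec \<Rightarrow> 'i vec" where
  "vsc c v = Poly_Mapping.map (\<lambda>x. c * x) v"

definition lin :: "('i \<Rightarrow> 'j vec) \<Rightarrow> 'i vec \<Rightarrow> 'j vec" where
  "lin f v = (\<Sum>i\<in>Poly_Mapping.keys v. vsc (Poly_Mapping.lookup v i) (f i))"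

definition lin2 :: "('i \<Rightarrow> 'j \<Rightarrow> 'k vec) \<Rightarrow> 'i vec \<Rightarrow> 'j vec \<Rightarrow> 'k vec" where
  "lin2 f u v = lin (\<lambda>i. lin (f i) v) u"

definition lfun :: "('i \<Rightarrow> complex) \<Rightarrow> 'i vec \<Rightarrow> complex" where
  "lfun f v = (\<Sum>i\<in>Poly_Mapping.keys v. Poly_Mapping.lookup v i * f i)"

definition tens :: "'i vec \<Rightarrow> 'j vec \<Rightarrow> ('i \<times> 'j) vec" where
  "tens u v = lin2 (\<lambda>i j. bv (i, j)) u v"

definition tmap :: "('i vec \<Rightarrow> 'k vec) \<Rightarrow> ('j vec \<Rightarrow> 'l vec) \<Rightarrow> ('i \<times> 'j) vec \<Rightarrow> ('k \<times> 'l) vec" where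
  "tmap f g = lin (\<lambda>(i, j). tens (f (bv i)) (g (bv j)))"

definition assoc_r :: "(('i \<times> 'j) \<times> 'k) vec \<Rightarrow> ('i \<times> ('j \<times> 'k)) vec" where
  "assoc_r = lin (\<lambda>((i, j), k). bv (i, (j, k)))"

text \<open>Structure maps on basis vectors: product, unit, coproduct, counit, antipode.\<close>
record 'i hopf =
  hm :: "'i \<Rightarrow> 'i \<Rightarrow> 'i vec"
  hu :: "'i vec"
  hc :: "'i \<Rightarrow> ('i \<times> 'i) vec"
  he :: "'i \<Rightarrow> complex"
  hs :: "'i \<Rightarrow> 'i vec"

definition mul :: "('i, 'z) hopf_scheme \<Rightarrow> 'i vec \<Rightarrow> 'i vec \<Rightarrow> 'i vec" where
  "mul H = lin2 (hm H)"

definition cop :: "('i, 'z) hopf_scheme \<Rightarrow> 'i vec \<Rightarrow> ('i \<times> 'i) vec" where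
  "cop H = lin (hc H)"

definition eps :: "('i, 'z) hopf_scheme \<Rightarrow> 'i vec \<Rightarrow> complex" where
  "eps H = lfun (he H)"

definition ant :: "('i, 'z) hopf_scheme \<Rightarrow> 'i vec \<Rightarrow> 'i vec" where
  "ant H = lin (hs H)"

definition mulT :: "('i, 'z) hopf_scheme \<Rightarrow> ('i \<times> 'i) vec \<Rightarrow> ('i \<times> 'i) vec \<Rightarrow> ('i \<times> 'i) vec" where
  "mulT H = lin2 (\<lambda>(a, b) (c, d). tens (mul H (bv a) (bv c)) (mul H (bv b) (bv d)))"

definition hopf_algebra :: "('i, 'z) hopf_scheme \<Rightarrow> bool" where
  "hopf_algebra H \<longleftrightarrow>
     (\<forall>x y z. mul H (mul H x y) z = mul H x (mul H y z)) \<and>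
     (\<forall>x. mul H (hu H) x = x \<and> mul H x (hu H) = x) \<and>
     (\<forall>x. assoc_r (tmap (cop H) id (cop H x)) = tmap id (cop H) (cop H x)) \<and>
     (\<forall>x. lin (\<lambda>(a, b). vsc (he H a) (bv b)) (cop H x) = x \<and>
          lin (\<lambda>(a, b). vsc (he H b) (bv a)) (cop H x) = x) \<and>
     (\<forall>x y. cop H (mul H x y) = mulT H (cop H x) (cop H y)) \<and>
     cop H (hu H) = tens (hu H) (hu H) \<and>
     (\<forall>x y. eps H (mul H x y) = eps H x * eps H y) \<and>
     eps H (hu H) = 1 \<and>
     (\<forall>x. lin (\<lambda>(a, b). mul H (ant H (bv a)) (bv b)) (cop H x) = vsc (eps H x) (hu H) \<and>
          lin (\<lambda>(a, b). mul H (bv a) (ant H (bv b))) (cop H x) = vsc (eps H x) (hu H))"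

definition pair :: "('c \<Rightarrow> 'a \<Rightarrow> complex) \<Rightarrow> 'c vec \<Rightarrow> 'a vec \<Rightarrow> complex" where
  "pair p \<phi> h = lfun (\<lambda>c. lfun (p c) h) \<phi>"

definition pairT :: "('c \<Rightarrow> 'a \<Rightarrow> complex) \<Rightarrow> ('c \<times> 'c) vec \<Rightarrow> ('a \<times> 'a) vec \<Rightarrow> complex" where
  "pairT p = pair (\<lambda>(c1, c2) (a1, a2). p c1 a1 * p c2 a2)"

definition dual_pairing ::
  "('c, 'z1) hopf_scheme \<Rightarrow> ('a, 'z2) hopf_scheme \<Rightarrow> ('c \<Rightarrow> 'a \<Rightarrow> complex) \<Rightarrow> bool" where
  "dual_pairing H' H p \<longleftrightarrow>
     (\<forall>\<phi> \<psi> h. pair p (mul H' \<phi> \<psi>) h = pairT p (tens \<phi> \<psi>) (cop H h)) \<and>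
     (\<forall>\<phi> h g. pair p \<phi> (mul H h g) = pairT p (cop H' \<phi>) (tens h g)) \<and>
     (\<forall>h. pair p (hu H') h = eps H h) \<and>
     (\<forall>\<phi>. pair p \<phi> (hu H) = eps H' \<phi>) \<and>
     (\<forall>\<phi> h. pair p (ant H' \<phi>) h = pair p \<phi> (ant H h))"

definition nondegenerate :: "('c \<Rightarrow> 'a \<Rightarrow> complex) \<Rightarrow> bool" where
  "nondegenerate p \<longleftrightarrow>
     (\<forall>\<phi>. (\<forall>h. pair p \<phi> h = 0) \<longrightarrow> \<phi> = 0) \<and>
     (\<forall>h. (\<forall>\<phi>. pair p \<phi> h = 0) \<longrightarrow> h = 0)"

text \<open>lt a h = a \<triangleright> h (left action of H2 on H1), rt a h = a \<triangleleft> h (right action of H1 on H2),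
given on basis vectors.  Matched pair axioms as in Majid, Foundations of Quantum Group Theory,
Def. 7.2.1.\<close>
definition matched_pair ::
  "('a, 'z1) hopf_scheme \<Rightarrow> ('b, 'z2) hopf_scheme \<Rightarrow>
   ('b \<Rightarrow> 'a \<Rightarrow> 'a vec) \<Rightarrow> ('b \<Rightarrow> 'a \<Rightarrow> 'b vec) \<Rightarrow> bool" where
  "matched_pair H1 H2 lt rt \<longleftrightarrow>
    (let L = lin2 lt; R = lin2 rt in
     \<comment> \<open>\<triangleright> is a left action, \<triangleleft> is a right action\<close>
     (\<forall>a b h. L (mul H2 a b) h = L a (L b h)) \<and> (\<forall>h. L (hu H2) h = h) \<and>
     (\<forall>a h g. R a (mul H1 h g) = R (R a h) g) \<and> (\<forall>a. R a (hu H1) = a) \<and>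
     \<comment> \<open>H1 is a left H2-module coalgebra\<close>
     (\<forall>a h. cop H1 (L a h) =
        lin (\<lambda>((a1, a2), (h1, h2)). tens (L (bv a1) (bv h1)) (L (bv a2) (bv h2)))
            (tens (cop H2 a) (cop H1 h))) \<and>
     (\<forall>a h. eps H1 (L a h) = eps H2 a * eps H1 h) \<and>
     \<comment> \<open>H2 is a right H1-module coalgebra\<close>
     (\<forall>a h. cop H2 (R a h) =
        lin (\<lambda>((a1, a2), (h1, h2)). tens (R (bv a1) (bv h1)) (R (bv a2) (bv h2)))
            (tens (cop H2 a) (cop H1 h))) \<and>
     (\<forall>a h. eps H2 (R a h) = eps H2 a * eps H1 h) \<and>
     \<comment> \<open>a \<triangleright> (h g) = (a(1) \<triangleright> h(1)) ((a(2) \<triangleleft> h(2)) \<triangleright> g),  a \<triangleright> 1 = \<epsilon>(a) 1\<close>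
     (\<forall>a h g. L a (mul H1 h g) =
        lin (\<lambda>((a1, a2), (h1, h2)). mul H1 (L (bv a1) (bv h1)) (L (R (bv a2) (bv h2)) g))
            (tens (cop H2 a) (cop H1 h))) \<and>
     (\<forall>a. L a (hu H1) = vsc (eps H2 a) (hu H1)) \<and>
     \<comment> \<open>(a b) \<triangleleft> h = (a \<triangleleft> (b(1) \<triangleright> h(1))) (b(2) \<triangleleft> h(2)),  1 \<triangleleft> h = \<epsilon>(h) 1\<close>
     (\<forall>a b h. R (mul H2 a b) h =
        lin (\<lambda>((b1, b2), (h1, h2)). mul H2 (R a (L (bv b1) (bv h1))) (R (bv b2) (bv h2)))
            (tens (cop H2 b) (cop H1 h))) \<and>
     (\<forall>h. R (hu H2) h = vsc (eps H1 h) (hu H2)) \<and>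
     \<comment> \<open>a(1) \<triangleleft> h(1) \<otimes> a(2) \<triangleright> h(2) = a(2) \<triangleleft> h(2) \<otimes> a(1) \<triangleright> h(1)\<close>
     (\<forall>a h.
        lin (\<lambda>((a1, a2), (h1, h2)). tens (R (bv a1) (bv h1)) (L (bv a2) (bv h2)))
            (tens (cop H2 a) (cop H1 h)) =
        lin (\<lambda>((a1, a2), (h1, h2)). tens (R (bv a2) (bv h2)) (L (bv a1) (bv h1)))
            (tens (cop H2 a) (cop H1 h))))"

text \<open>Double cross product H1 \<bowtie> H2 on H1 \<otimes> H2:
 (h \<otimes> a)(g \<otimes> b) = h (a(1) \<triangleright> g(1)) \<otimes> (a(2) \<triangleleft> g(2)) b, tensor product coproduct.\<close>
definition dcp_mul ::
  "('a, 'z1) hopf_scheme \<Rightarrow> ('b, 'z2) hopf_scheme \<Rightarrow>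
   ('b \<Rightarrow> 'a \<Rightarrow> 'a vec) \<Rightarrow> ('b \<Rightarrow> 'a \<Rightarrow> 'b vec) \<Rightarrow>
   ('a \<times> 'b) vec \<Rightarrow> ('a \<times> 'b) vec \<Rightarrow> ('a \<times> 'b) vec" where
  "dcp_mul H1 H2 lt rt = lin2 (\<lambda>(h, a) (g, b).
     lin (\<lambda>((a1, a2), (g1, g2)).
            tens (mul H1 (bv h) (lin2 lt (bv a1) (bv g1))) (mul H2 (lin2 rt (bv a2) (bv g2)) (bv b)))
         (tens (cop H2 (bv a)) (cop H1 (bv g))))"

definition dcp_cop ::
  "('a, 'z1) hopf_scheme \<Rightarrow> ('b, 'z2) hopf_scheme \<Rightarrow> ('a \<times> 'b) vec \<Rightarrow> (('a \<times> 'b) \<times> ('a \<times> 'b)) vec" where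
  "dcp_cop H1 H2 = lin (\<lambda>(g, b).
     lin (\<lambda>((g1, g2), (b1, b2)). tens (bv (g1, b1)) (bv (g2, b2)))
         (tens (cop H1 (bv g)) (cop H2 (bv b))))"

text \<open>ra \<phi> a = \<phi> \<triangleleft> a (right action of H2 on H1' on basis vectors), co a = a(0) \<otimes> a(1)
(left coaction of H1' on H2, on basis vectors).\<close>
definition bcp_mul ::
  "('b, 'z2) hopf_scheme \<Rightarrow> ('c, 'z3) hopf_scheme \<Rightarrow> ('c \<Rightarrow> 'b \<Rightarrow> 'c vec) \<Rightarrow>
   ('b \<times> 'c) vec \<Rightarrow> ('b \<times> 'c) vec \<Rightarrow> ('b \<times> 'c) vec" where
  "bcp_mul H2 H' ra = lin2 (\<lambda>(a, \<phi>) (b, \<psi>).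
     lin (\<lambda>(b1, b2). tens (mul H2 (bv a) (bv b1)) (mul H' (lin2 ra (bv \<phi>) (bv b2)) (bv \<psi>)))
         (cop H2 (bv b)))"

text \<open>\<Delta>(a \<otimes> \<phi>) = (a(1) \<otimes> a(2)(0) \<phi>(1)) \<otimes> (a(2)(1) \<otimes> \<phi>(2))\<close>
definition bcp_cop ::
  "('b, 'z2) hopf_scheme \<Rightarrow> ('c, 'z3) hopf_scheme \<Rightarrow> ('b \<Rightarrow> ('c \<times> 'b) vec) \<Rightarrow>
   ('b \<times> 'c) vec \<Rightarrow> (('b \<times> 'c) \<times> ('b \<times> 'c)) vec" where
  "bcp_cop H2 H' co = lin (\<lambda>(a, \<phi>).
     lin (\<lambda>((a1, a2), (\<phi>1, \<phi>2)).
            lin (\<lambda>(c, a'). tens (tens (bv a1) (mul H' (bv c) (bv \<phi>1))) (tens (bv a') (bv \<phi>2)))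
                (co a2))
         (tens (cop H2 (bv a)) (cop H' (bv \<phi>))))"

definition act1 ::
  "('c, 'z3) hopf_scheme \<Rightarrow> ('c \<Rightarrow> 'a \<Rightarrow> complex) \<Rightarrow> ('c \<Rightarrow> 'b \<Rightarrow> 'c vec) \<Rightarrow>
   'c vec \<Rightarrow> ('a \<times> 'b) vec \<Rightarrow> 'c vec" where
  "act1 H' p ra = lin2 (\<lambda>\<phi> (h, a).
     lin (\<lambda>(\<phi>1, \<phi>2). vsc (p \<phi>1 h) (lin2 ra (bv \<phi>2) (bv a))) (cop H' (bv \<phi>)))"

text \<open>A1 = (H1 \<bowtie> H2) \<triangleright>< H1': (x \<otimes> \<phi>)(y \<otimes> \<psi>) = x y(1) \<otimes> (\<phi> \<triangleleft> y(2)) \<psi>, where the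
space (H1 \<otimes> H2) \<otimes> H1' is identified with H1 \<otimes> (H2 \<otimes> H1') via the associator.\<close>
definition A1_mul ::
  "('a, 'z1) hopf_scheme \<Rightarrow> ('b, 'z2) hopf_scheme \<Rightarrow> ('c, 'z3) hopf_scheme \<Rightarrow>
   ('b \<Rightarrow> 'a \<Rightarrow> 'a vec) \<Rightarrow> ('b \<Rightarrow> 'a \<Rightarrow> 'b vec) \<Rightarrow> ('c \<Rightarrow> 'a \<Rightarrow> complex) \<Rightarrow>
   ('c \<Rightarrow> 'b \<Rightarrow> 'c vec) \<Rightarrow>
   ('a \<times> 'b \<times> 'c) vec \<Rightarrow> ('a \<times> 'b \<times> 'c) vec \<Rightarrow> ('a \<times> 'b \<times> 'c) vec" where
  "A1_mul H1 H2 H' lt rt p ra = lin2 (\<lambda>(h, a, \<phi>) (g, b, \<psi>).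
     lin (\<lambda>(y1, y2).
            assoc_r (tens (dcp_mul H1 H2 lt rt (bv (h, a)) (bv y1))
                          (mul H' (act1 H' p ra (bv \<phi>) (bv y2)) (bv \<psi>))))
         (dcp_cop H1 H2 (bv (g, b))))"

definition act2 ::
  "('a, 'z1) hopf_scheme \<Rightarrow> ('b \<Rightarrow> 'a \<Rightarrow> 'a vec) \<Rightarrow> ('c \<Rightarrow> 'a \<Rightarrow> complex) \<Rightarrow>
   ('b \<times> 'c) vec \<Rightarrow> 'a vec \<Rightarrow> 'a vec" where
  "act2 H1 lt p = lin2 (\<lambda>(a, \<phi>) h.
     lin (\<lambda>(h1, h2). vsc (p \<phi> h2) (lin2 lt (bv a) (bv h1))) (cop H1 (bv h)))"

definition A2_mul ::
  "('a, 'z1) hopf_scheme \<Rightarrow> ('b, 'z2) hopf_scheme \<Rightarrow> ('c, 'z3) hopf_scheme \<Rightarrow>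
   ('b \<Rightarrow> 'a \<Rightarrow> 'a vec) \<Rightarrow> ('c \<Rightarrow> 'a \<Rightarrow> complex) \<Rightarrow>
   ('c \<Rightarrow> 'b \<Rightarrow> 'c vec) \<Rightarrow> ('b \<Rightarrow> ('c \<times> 'b) vec) \<Rightarrow>
   ('a \<times> 'b \<times> 'c) vec \<Rightarrow> ('a \<times> 'b \<times> 'c) vec \<Rightarrow> ('a \<times> 'b \<times> 'c) vec" where
  "A2_mul H1 H2 H' lt p ra co = lin2 (\<lambda>(h, X) (g, Y).
     lin (\<lambda>(X1, X2).
            tens (mul H1 (bv h) (act2 H1 lt p (bv X1) (bv g)))
                 (bcp_mul H2 H' ra (bv X2) (bv Y)))
         (bcp_cop H2 H' co (bv X)))"

definition hw_mul ::
  "('a, 'z1) hopf_scheme \<Rightarrow> ('c, 'z3) hopf_scheme \<Rightarrow> ('c \<Rightarrow> 'a \<Rightarrow> complex) \<Rightarrow>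
   ('a \<times> 'c) vec \<Rightarrow> ('a \<times> 'c) vec \<Rightarrow> ('a \<times> 'c) vec" where
  "hw_mul H1 H' p = lin2 (\<lambda>(h, \<phi>) (g, \<psi>).
     lin (\<lambda>((g1, g2), (\<phi>1, \<phi>2)).
            vsc (p \<phi>1 g2) (tens (mul H1 (bv h) (bv g1)) (mul H' (bv \<phi>2) (bv \<psi>))))
         (tens (cop H1 (bv g)) (cop H' (bv \<phi>))))"

definition emb_dcp :: "('c, 'z3) hopf_scheme \<Rightarrow> ('a \<times> 'b) vec \<Rightarrow> ('a \<times> 'b \<times> 'c) vec" where
  "emb_dcp H' = lin (\<lambda>(h, a). tens (bv h) (tens (bv a) (hu H')))"

definition emb_bcp :: "('a, 'z1) hopf_scheme \<Rightarrow> ('b \<times> 'c) vec \<Rightarrow> ('a \<times> 'b \<times> 'c) vec" where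
  "emb_bcp H1 = lin (\<lambda>(a, \<phi>). tens (hu H1) (tens (bv a) (bv \<phi>)))"

definition emb_hw :: "('b, 'z2) hopf_scheme \<Rightarrow> ('a \<times> 'c) vec \<Rightarrow> ('a \<times> 'b \<times> 'c) vec" where
  "emb_hw H2 = lin (\<lambda>(h, \<phi>). tens (bv h) (tens (hu H2) (bv \<phi>)))"

end

theory Submission
  imports Defs
begin


lemma lookup_vsc[simp]: "Poly_Mapping.lookup (vsc c v) i = c * Poly_Mapping.lookup v i"
  unfolding vsc_def by (simp add: map.rep_eq when_def)

lemma lookup_bv: "Poly_Mapping.lookup (bv i) k = (if i = k then 1 else 0)"
  unfolding bv_def by (simp add: lookup_single when_def)

lemma sum_keys_superset:
  assumes "finite S" "Poly_Mapping.keys v \<subseteq> S"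
  shows "(\<Sum>i\<in>Poly_Mapping.keys (v::'i vec). Poly_Mapping.lookup v i * c i) = (\<Sum>i\<in>S. Poly_Mapping.lookup v i * c i)"
  by (rule sum.mono_neutral_left) (use assms in \<open>auto simp: in_keys_iff\<close>)

lemma lookup_lin: "Poly_Mapping.lookup (lin f v) k = (\<Sum>i\<in>Poly_Mapping.keys v. Poly_Mapping.lookup v i * Poly_Mapping.lookup (f i) k)"
  unfolding lin_def by (simp add: lookup_sum)

lemma lookup_lin_superset:
  assumes "finite S" "Poly_Mapping.keys v \<subseteq> S"
  shows "Poly_Mapping.lookup (lin f v) k = (\<Sum>i\<in>S. Poly_Mapping.lookup v i * Poly_Mapping.lookup (f i) k)"
  unfolding lookup_lin by (rule sum_keys_superset[OF assms])

lemma lin_add: "lin f (u + v) = lin f u + lin f v"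
proof (rule poly_mapping_eqI)
  fix k
  let ?S = "Poly_Mapping.keys u \<union> Poly_Mapping.keys v \<union> Poly_Mapping.keys (u+v)"
  have f: "finite ?S" by simp
  show "Poly_Mapping.lookup (lin f (u + v)) k = Poly_Mapping.lookup (lin f u + lin f v) k"
    unfolding lookup_add
    by (subst (1 2 3) lookup_lin_superset[OF f]) (auto simp: lookup_add algebra_simps sum.distrib)
qed

lemma lin_vsc: "lin f (vsc c v) = vsc c (lin f v)"
proof (rule poly_mapping_eqI)
  fix k
  let ?S = "Poly_Mapping.keys v \<union> Poly_Mapping.keys (vsc c v)"
  have f: "finite ?S" by simp
  show "Poly_Mapping.lookup (lin f (vsc c v)) k = Poly_Mapping.lookup (vsc c (lin f v)) k"
    unfolding lookup_vsc
    by (subst (1 2) lookup_lin_superset[OF f]) (auto simp: sum_distrib_left algebra_simps)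
qed

lemma lin_zero[simp]: "lin f 0 = 0"
  unfolding lin_def by simp

lemma lin_bv[simp]: "lin f (bv i) = f i"
proof (rule poly_mapping_eqI)
  fix k
  have f: "finite {i}" by simp
  show "Poly_Mapping.lookup (lin f (bv i)) k = Poly_Mapping.lookup (f i) k"
    by (subst lookup_lin_superset[OF f]) (auto simp: lookup_bv bv_def)
qed

lemma vsc_add: "vsc c (u + v) = vsc c u + vsc c v"
  by (rule poly_mapping_eqI) (simp add: lookup_add algebra_simps)
lemma vsc_add2: "vsc (c + d) u = vsc c u + vsc d u"
  by (rule poly_mapping_eqI) (simp add: lookup_add algebra_simps)
lemma vsc_vsc[simp]: "vsc c (vsc d u) = vsc (c * d) u"
  by (rule poly_mapping_eqI) (simp add: algebra_simps)
lemma vsc_one[simp]: "vsc 1 u = u"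
  by (rule poly_mapping_eqI) simp
lemma vsc_zero[simp]: "vsc 0 u = 0" "vsc c 0 = 0"
  by (rule poly_mapping_eqI, simp)+

lemma vsc_sum: "vsc c (sum f S) = (\<Sum>i\<in>S. vsc c (f i))"
  by (rule poly_mapping_eqI) (simp add: lookup_sum sum_distrib_left)

lemma lin_expand: "lin bv v = v"
proof (rule poly_mapping_eqI)
  fix k
  show "Poly_Mapping.lookup (lin bv v) k = Poly_Mapping.lookup v k"
    unfolding lookup_lin lookup_bv
    by (cases "k \<in> Poly_Mapping.keys v") (auto simp: in_keys_iff if_distrib sum.delta cong: if_cong)
qed

definition lin_map :: "('i vec \<Rightarrow> 'j vec) \<Rightarrow> bool" where
  "lin_map g \<longleftrightarrow> (\<forall>u v. g (u + v) = g u + g v) \<and> (\<forall>c u. g (vsc c u) = vsc c (g u))"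

lemma lin_map_lin[simp]: "lin_map (lin f)"
  unfolding lin_map_def by (simp add: lin_add lin_vsc)

lemma lin_map_zero: "lin_map g \<Longrightarrow> g 0 = 0"
  unfolding lin_map_def by (metis vsc_zero(1))

lemma lin_map_sum: "lin_map g \<Longrightarrow> g (sum f S) = (\<Sum>i\<in>S. g (f i))"
  by (induction S rule: infinite_finite_induct) (auto simp: lin_map_zero lin_map_def)

lemma lin_ext: assumes "lin_map g" shows "g v = lin (\<lambda>i. g (bv i)) v"
proof -
  have "g v = g (lin bv v)" by (simp add: lin_expand)
  also have "\<dots> = lin (\<lambda>i. g (bv i)) v"
    unfolding lin_def using assms by (simp add: lin_map_sum lin_map_def)
  finally show ?thesis .
qed

lemma lin_eqI: assumes "lin_map g1" "lin_map g2" "\<And>i. g1 (bv i) = g2 (bv i)" shows "g1 v = g2 v"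
proof -
  have "g1 v = lin (\<lambda>i. g1 (bv i)) v" by (rule lin_ext[OF assms(1)])
  also have "\<dots> = lin (\<lambda>i. g2 (bv i)) v" by (simp only: assms(3))
  also have "\<dots> = g2 v" by (rule lin_ext[OF assms(2), symmetric])
  finally show ?thesis .
qed

lemma lin_map_comp: "lin_map g \<Longrightarrow> lin_map f \<Longrightarrow> lin_map (\<lambda>x. g (f x))"
  unfolding lin_map_def by simp

lemma lin_lin: "lin g (lin f v) = lin (\<lambda>i. lin g (f i)) v"
  by (rule lin_eqI[OF lin_map_comp[OF lin_map_lin lin_map_lin] lin_map_lin]) (simp only: lin_bv)

lemma lin_cong: "(\<And>i. f i = g i) \<Longrightarrow> lin f v = lin g v"
  by (metis ext)

lemma lin_swap: "lin (\<lambda>i. lin (\<lambda>j. f i j) v) u = lin (\<lambda>j. lin (\<lambda>i. f i j) u) v"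
proof (rule poly_mapping_eqI)
  fix k show "Poly_Mapping.lookup (lin (\<lambda>i. lin (f i) v) u) k = Poly_Mapping.lookup (lin (\<lambda>j. lin (\<lambda>i. f i j) u) v) k"
    by (simp add: lookup_lin sum_distrib_left sum.swap[of _ "Poly_Mapping.keys u"] algebra_simps)
qed


lemma lfun_superset:
  assumes "finite S" "Poly_Mapping.keys v \<subseteq> S"
  shows "lfun f v = (\<Sum>i\<in>S. Poly_Mapping.lookup v i * f i)"
  unfolding lfun_def by (rule sum_keys_superset[OF assms])

lemma lfun_bv[simp]: "lfun f (bv i) = f i"
  by (subst lfun_superset[of "{i}"]) (auto simp: lookup_bv bv_def)

lemma lfun_zero[simp]: "lfun f 0 = 0"
  unfolding lfun_def by simp

lemma lfun_vsc[simp]: "lfun f (vsc c v) = c * lfun f v"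
  by (subst (1 2) lfun_superset[of "Poly_Mapping.keys v \<union> Poly_Mapping.keys (vsc c v)"])
     (auto simp: sum_distrib_left algebra_simps)

lemma lfun_add: "lfun f (u + v) = lfun f u + lfun f v"
  by (subst (1 2 3) lfun_superset[of "Poly_Mapping.keys u \<union> Poly_Mapping.keys v \<union> Poly_Mapping.keys (u+v)"])
     (auto simp: lookup_add algebra_simps sum.distrib)

lemma lfun_lin: "lfun f (lin G v) = lfun (\<lambda>i. lfun f (G i)) v"
proof -
  let ?S = "Poly_Mapping.keys (lin G v) \<union> (\<Union>i\<in>Poly_Mapping.keys v. Poly_Mapping.keys (G i))"
  have fS: "finite ?S" by simp
  have "lfun f (lin G v) = (\<Sum>j\<in>?S. Poly_Mapping.lookup (lin G v) j * f j)"
    by (rule lfun_superset[OF fS]) auto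
  also have "\<dots> = (\<Sum>j\<in>?S. \<Sum>i\<in>Poly_Mapping.keys v. Poly_Mapping.lookup v i * Poly_Mapping.lookup (G i) j * f j)"
    by (simp add: lookup_lin sum_distrib_right)
  also have "\<dots> = (\<Sum>i\<in>Poly_Mapping.keys v. Poly_Mapping.lookup v i * (\<Sum>j\<in>?S. Poly_Mapping.lookup (G i) j * f j))"
    by (subst sum.swap) (simp add: sum_distrib_left mult.assoc)
  also have "\<dots> = (\<Sum>i\<in>Poly_Mapping.keys v. Poly_Mapping.lookup v i * lfun f (G i))"
    by (rule sum.cong[OF refl]) (subst lfun_superset[OF fS], auto)
  finally show ?thesis unfolding lfun_def .
qed

lemma lin_vsc_fold: "lin (\<lambda>j. vsc (f j) X) W = vsc (lfun f W) X"
  by (rule poly_mapping_eqI) (simp add: lookup_lin lfun_def sum_distrib_left algebra_simps)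

lemma lfun_swap: "lfun (\<lambda>i. lfun (f i) v) u = lfun (\<lambda>j. lfun (\<lambda>i. f i j) u) v"
  by (simp add: lfun_def sum_distrib_left sum.swap[of _ "Poly_Mapping.keys u"] algebra_simps)

lemma lfun_cmult: "lfun (\<lambda>i. c * f i) u = c * lfun f u"
  by (simp add: lfun_def sum_distrib_left algebra_simps)

lemma lfun_cong: "(\<And>i. f i = g i) \<Longrightarrow> lfun f v = lfun g v"
  by (metis ext)

lemma lin_push: assumes "lin_map g" shows "g (lin F u) = lin (\<lambda>i. g (F i)) u"
  using lin_ext[OF lin_map_comp[OF assms lin_map_lin], of F u] by (simp only: lin_bv)

lemma lin_map_vsc: "lin_map g \<Longrightarrow> g (vsc c u) = vsc c (g u)"
  unfolding lin_map_def by auto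

lemma lin2_bv1[simp]: "lin2 f (bv i) v = lin (f i) v"
  unfolding lin2_def by simp
lemma lin2_bv2[simp]: "lin2 f u (bv j) = lin (\<lambda>i. f i j) u"
  unfolding lin2_def by simp

lemma lin2_map1: "lin_map (\<lambda>x. lin2 f x y)"
  unfolding lin2_def by simp
lemma lin2_swap: "lin2 f u v = lin (\<lambda>j. lin (\<lambda>i. f i j) u) v"
  unfolding lin2_def by (rule lin_swap)
lemma lin2_map2: "lin_map (\<lambda>y. lin2 f x y)"
  unfolding lin2_swap by simp

lemma lin2_push1: "lin2 f (lin F u) y = lin (\<lambda>i. lin2 f (F i) y) u"
  by (rule lin_push[OF lin2_map1])
lemma lin2_push2: "lin2 f x (lin F u) = lin (\<lambda>i. lin2 f x (F i)) u"
  by (rule lin_push[OF lin2_map2])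
lemma lin2_vsc1: "lin2 f (vsc c u) y = vsc c (lin2 f u y)"
  by (rule lin_map_vsc[OF lin2_map1])
lemma lin2_vsc2: "lin2 f x (vsc c u) = vsc c (lin2 f x u)"
  by (rule lin_map_vsc[OF lin2_map2])

lemma vsc_push: "vsc c (lin F u) = lin (\<lambda>i. vsc c (F i)) u"
  by (rule poly_mapping_eqI) (simp add: lookup_lin sum_distrib_left algebra_simps)

lemma tens_bv[simp]: "tens (bv i) (bv j) = bv (i, j)"
  unfolding tens_def by simp

lemma lin_tens: "lin F (tens u v) = lin (\<lambda>i. lin (\<lambda>j. F (i, j)) v) u"
  unfolding tens_def lin2_def by (simp add: lin_lin)


lemma tens_map1: "lin_map (\<lambda>x. tens x y)" unfolding tens_def by (rule lin2_map1)
lemma tens_map2: "lin_map (\<lambda>y. tens x y)" unfolding tens_def by (rule lin2_map2)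
lemma mul_map1: "lin_map (\<lambda>x. mul H x y)" unfolding mul_def by (rule lin2_map1)
lemma mul_map2: "lin_map (\<lambda>y. mul H x y)" unfolding mul_def by (rule lin2_map2)
lemma cop_map: "lin_map (cop H)" unfolding cop_def by simp

lemmas push_rules =
  lin_push[OF tens_map1] lin_push[OF tens_map2] lin_map_vsc[OF tens_map1] lin_map_vsc[OF tens_map2]
  lin_push[OF mul_map1] lin_push[OF mul_map2] lin_map_vsc[OF mul_map1] lin_map_vsc[OF mul_map2]
  lin_push[OF cop_map] lin_map_vsc[OF cop_map]
  lin2_push1 lin2_push2 lin2_vsc1 lin2_vsc2 vsc_push lin_vsc lin_lin lfun_lin lfun_vsc

lemma cop_bv[simp]: "cop H (bv i) = hc H i" unfolding cop_def by simp
lemma eps_bv[simp]: "eps H (bv i) = he H i" unfolding eps_def by simp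
lemma eps_lin: "eps H (lin F u) = lfun (\<lambda>i. eps H (F i)) u" unfolding eps_def by (rule lfun_lin)
lemma eps_vsc: "eps H (vsc c u) = c * eps H u" unfolding eps_def by simp
lemma pair_bv[simp]: "pair p (bv c) h = lfun (p c) h" unfolding pair_def by simp
lemma pair_lin1: "pair p (lin F u) h = lfun (\<lambda>i. pair p (F i) h) u" unfolding pair_def by (rule lfun_lin)
lemma pair_vsc1: "pair p (vsc c u) h = c * pair p u h" unfolding pair_def by simp
lemma pair_lin2: "pair p \<phi> (lin F u) = lfun (\<lambda>i. pair p \<phi> (F i)) u"
  unfolding pair_def lfun_lin by (rule lfun_swap)
lemma pair_vsc2: "pair p \<phi> (vsc c u) = c * pair p \<phi> u" unfolding pair_def by (simp add: lfun_cmult)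

lemma tens_lin_bil:
  assumes "\<And>y. lin_map (\<lambda>x. B x y)" "\<And>x. lin_map (\<lambda>y. B x y)"
  shows "lin (\<lambda>(i,j). B (bv i) (bv j)) (tens u v) = B u v"
proof -
  have "lin (\<lambda>(i,j). B (bv i) (bv j)) (tens u v) = lin (\<lambda>i. lin (\<lambda>j. B (bv i) (bv j)) v) u"
    by (simp add: lin_tens)
  also have "\<dots> = lin (\<lambda>i. B (bv i) v) u"
    by (rule lin_cong) (rule lin_ext[OF assms(2), symmetric])
  also have "\<dots> = B u v" by (rule lin_ext[OF assms(1), symmetric])
  finally show ?thesis .
qed


lemma assoc_map: "lin_map assoc_r" unfolding assoc_r_def by simp
lemma act2_map1: "lin_map (\<lambda>x. act2 H1 lt p x y)" unfolding act2_def by (rule lin2_map1)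
lemma bcp_map1: "lin_map (\<lambda>x. bcp_mul H2 H' ra x y)" unfolding bcp_mul_def by (rule lin2_map1)

lemma assoc_tens[simp]: "assoc_r (tens (tens x y) z) = tens x (tens y z)"
proof -
  have "assoc_r (tens (tens x y) z) = lin (\<lambda>i. lin (\<lambda>j. lin (\<lambda>k. bv (i, j, k)) z) y) x"
    unfolding assoc_r_def by (simp add: lin_tens case_prod_unfold)
  also have "\<dots> = tens x (tens y z)"
    unfolding tens_def lin2_def by (simp add: lin_lin)
  finally show ?thesis .
qed

lemmas push2 = push_rules lin_push[OF assoc_map] lin_map_vsc[OF assoc_map]

lemma dcp_cop_bv: "dcp_cop H1 H2 (bv (g,b)) = lin (\<lambda>(g1,g2). lin (\<lambda>(b1,b2). bv ((g1,b1),(g2,b2))) (hc H2 b)) (hc H1 g)"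
  unfolding dcp_cop_def by (simp add: lin_tens case_prod_unfold)

lemma dcp_mul_bv: "dcp_mul H1 H2 lt rt (bv(h,a)) (bv(g,b)) =
  lin (\<lambda>(a1,a2). lin (\<lambda>(g1,g2). tens (mul H1 (bv h) (lt a1 g1)) (mul H2 (rt a2 g2) (bv b))) (hc H1 g)) (hc H2 a)"
  unfolding dcp_mul_def by (simp add: lin_tens case_prod_unfold)

lemma act1_bv: "act1 H' p ra (bv \<phi>) (bv (g,b)) = lin (\<lambda>(\<phi>1,\<phi>2). vsc (p \<phi>1 g) (ra \<phi>2 b)) (hc H' \<phi>)"
  unfolding act1_def by (simp add: case_prod_unfold)

lemma A1_bv: "A1_mul H1 H2 H' lt rt p ra (bv (h,a,\<phi>)) (bv (g,b,\<psi>)) =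
  lin (\<lambda>(y1,y2). assoc_r (tens (dcp_mul H1 H2 lt rt (bv(h,a)) (bv y1)) (mul H' (act1 H' p ra (bv \<phi>) (bv y2)) (bv \<psi>)))) (dcp_cop H1 H2 (bv(g,b)))"
  unfolding A1_mul_def by (simp add: case_prod_unfold)

lemma bcp_mul_bv: "bcp_mul H2 H' ra (bv(a,\<phi>)) (bv(b,\<psi>)) =
  lin (\<lambda>(b1,b2). tens (mul H2 (bv a) (bv b1)) (mul H' (ra \<phi> b2) (bv \<psi>))) (hc H2 b)"
  unfolding bcp_mul_def by (simp add: case_prod_unfold)

lemma act2_gen: "act2 H1 lt p (tens (bv a) W) (bv g) = lin (\<lambda>(g1,g2). vsc (pair p W (bv g2)) (lt a g1)) (hc H1 g)"
proof -
  have "act2 H1 lt p (tens (bv a) W) (bv g) = act2 H1 lt p (lin (\<lambda>j. bv (a,j)) W) (bv g)"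
    unfolding tens_def by simp
  also have "\<dots> = lin (\<lambda>j. act2 H1 lt p (bv (a,j)) (bv g)) W"
    by (rule lin_push[OF act2_map1])
  also have "\<dots> = lin (\<lambda>j. lin (\<lambda>i. vsc (p j (snd i)) (lt a (fst i))) (hc H1 g)) W"
    unfolding act2_def by (simp add: case_prod_unfold)
  also have "\<dots> = lin (\<lambda>i. lin (\<lambda>j. vsc (p j (snd i)) (lt a (fst i))) W) (hc H1 g)"
    by (rule lin_swap)
  also have "\<dots> = lin (\<lambda>(g1,g2). vsc (pair p W (bv g2)) (lt a g1)) (hc H1 g)"
    by (simp add: lin_vsc_fold case_prod_unfold pair_def)
  finally show ?thesis .
qed

lemma bcp_cop_bv: "bcp_cop H2 H' co (bv (a,\<phi>)) = lin (\<lambda>(a1,a2). lin (\<lambda>(\<phi>1,\<phi>2). lin (\<lambda>(c,a'). tens (tens (bv a1) (mul H' (bv c) (bv \<phi>1))) (tens (bv a') (bv \<phi>2))) (co a2)) (hc H' \<phi>)) (hc H2 a)"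
  unfolding bcp_cop_def by (simp only: lin_bv lin_tens case_prod_unfold fst_conv snd_conv cop_bv)

lemma A2_bv: "A2_mul H1 H2 H' lt p ra co (bv (h,a,\<phi>)) (bv (g,b,\<psi>)) =
  lin (\<lambda>(a1,a2). lin (\<lambda>(\<phi>1,\<phi>2). lin (\<lambda>(c,a').
     tens (mul H1 (bv h) (act2 H1 lt p (tens (bv a1) (mul H' (bv c) (bv \<phi>1))) (bv g)))
          (bcp_mul H2 H' ra (bv (a',\<phi>2)) (bv (b,\<psi>)))) (co a2)) (hc H' \<phi>)) (hc H2 a)"
proof -
  let ?B = "\<lambda>U V. tens (mul H1 (bv h) (act2 H1 lt p U (bv g))) (bcp_mul H2 H' ra V (bv (b,\<psi>)))"
  have b1: "lin_map (\<lambda>U. ?B U V)" for V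
    by (intro lin_map_comp[OF tens_map1] lin_map_comp[OF mul_map2] act2_map1)
  have b2: "lin_map (\<lambda>V. ?B U V)" for U
    by (intro lin_map_comp[OF tens_map2] bcp_map1)
  have "A2_mul H1 H2 H' lt p ra co (bv (h,a,\<phi>)) (bv (g,b,\<psi>)) = lin (\<lambda>(i,j). ?B (bv i) (bv j)) (bcp_cop H2 H' co (bv (a,\<phi>)))"
    unfolding A2_mul_def by (simp add: case_prod_unfold)
  also have "\<dots> = lin (\<lambda>(a1,a2). lin (\<lambda>(\<phi>1,\<phi>2). lin (\<lambda>(c,a'). lin (\<lambda>(i,j). ?B (bv i) (bv j))
        (tens (tens (bv a1) (mul H' (bv c) (bv \<phi>1))) (tens (bv a') (bv \<phi>2)))) (co a2)) (hc H' \<phi>)) (hc H2 a)"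
    by (simp only: bcp_cop_bv lin_lin case_prod_unfold)
  also have "\<dots> = lin (\<lambda>(a1,a2). lin (\<lambda>(\<phi>1,\<phi>2). lin (\<lambda>(c,a').
     tens (mul H1 (bv h) (act2 H1 lt p (tens (bv a1) (mul H' (bv c) (bv \<phi>1))) (bv g)))
          (bcp_mul H2 H' ra (bv (a',\<phi>2)) (bv (b,\<psi>)))) (co a2)) (hc H' \<phi>)) (hc H2 a)"
    by (simp only: tens_lin_bil[OF b1 b2] tens_bv)
  finally show ?thesis .
qed


lemma swap_hc: "lin (\<lambda>i. lin (\<lambda>j. f i j) (hc H x)) u = lin (\<lambda>j. lin (\<lambda>i. f i j) u) (hc H x)"
  by (rule lin_swap)
lemma swap_co: "lin (\<lambda>i. lin (\<lambda>j. f i j) v) (co y) = lin (\<lambda>j. lin (\<lambda>i. f i j) (co y)) v"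
  by (rule lin_swap)
lemma swap_hc_co: "lin (\<lambda>i. lin (\<lambda>j. f i j) (hc H x)) (co y) = lin (\<lambda>j. lin (\<lambda>i. f i j) (co y)) (hc H x)"
  by (rule lin_swap)

lemma coassoc_fs:
  assumes "hopf_algebra H"
  shows "lin (\<lambda>i. lin (\<lambda>j. F (fst j) (snd j) (snd i)) (hc H (fst i))) (hc H g) =
         lin (\<lambda>i. lin (\<lambda>j. F (fst i) (fst j) (snd j)) (hc H (snd i))) (hc H g)"
proof -
  have ax: "assoc_r (tmap (cop H) id (cop H (bv g))) = tmap id (cop H) (cop H (bv g))"
    using assms unfolding hopf_algebra_def by blast
  have "lin (\<lambda>(x,y,z). F x y z) (assoc_r (tmap (cop H) id (cop H (bv g)))) =
        lin (\<lambda>(x,y,z). F x y z) (tmap id (cop H) (cop H (bv g)))" by (simp only: ax)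
  then show ?thesis
    unfolding assoc_r_def tmap_def by (simp add: lin_lin lin_tens case_prod_unfold)
qed


lemma vsc_lfun: "vsc (lfun f W) X = lin (\<lambda>j. vsc (f j) X) W"
  by (rule lin_vsc_fold[symmetric])

lemma main_bv:
  fixes H1 :: "'a hopf" and H2 :: "'b hopf" and H' :: "'c hopf"
  assumes H1: "hopf_algebra H1"
    and dp: "dual_pairing H' H1 p"
    and rt_co: "\<forall>a h. lin2 rt a h = lin (\<lambda>(c, b). vsc (pair p (bv c) h) (bv b)) (lin co a)"
  shows "A1_mul H1 H2 H' lt rt p ra (bv (h,a,\<phi>)) (bv (g,b,\<psi>)) = A2_mul H1 H2 H' lt p ra co (bv (h,a,\<phi>)) (bv (g,b,\<psi>))"
proof -
  have rt_bv: "rt x y = lin (\<lambda>(c,b). vsc (p c y) (bv b)) (co x)" for x y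
    using rt_co[rule_format, of "bv x" "bv y"] by (simp add: case_prod_unfold)
  have pair_mul: "pair p (mul H' (bv c) (bv \<phi>')) (bv x) = lfun (\<lambda>j. p c (fst j) * p \<phi>' (snd j)) (hc H1 x)" for c \<phi>' x
    using dp unfolding dual_pairing_def pairT_def by (simp add: case_prod_unfold)
  define F1 where "F1 = (\<lambda>x y z. lin (\<lambda>ib. lin (\<lambda>ic. lin (\<lambda>id. vsc (p (fst ic) z)
      (tens (mul H1 (bv h) (lt (fst id) x)) (tens (mul H2 (rt (snd id) y) (bv (fst ib))) (mul H' (ra (snd ic) (snd ib)) (bv \<psi>)))))
      (hc H2 a)) (hc H' \<phi>)) (hc H2 b))"
  note sorts = swap_hc[where u="hc H2 b" and H=H1] swap_hc[where u="hc H' \<phi>" and H=H1] swap_hc[where u="hc H2 a" and H=H1]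
     swap_hc_co[where H=H1 and co=co]
     swap_co[where v="hc H2 b" and co=co] swap_co[where v="hc H' \<phi>" and co=co] swap_co[where v="hc H2 a" and co=co]
     lin_swap[where u="hc H2 a" and v="hc H2 b"] lin_swap[where u="hc H2 a" and v="hc H' \<phi>"] lin_swap[where u="hc H' \<phi>" and v="hc H2 b"]
  have "A1_mul H1 H2 H' lt rt p ra (bv (h,a,\<phi>)) (bv (g,b,\<psi>)) =
     lin (\<lambda>i. lin (\<lambda>j. F1 (fst j) (snd j) (snd i)) (hc H1 (fst i))) (hc H1 g)"
    unfolding F1_def by (simp add: A1_bv dcp_cop_bv dcp_mul_bv act1_bv push2 case_prod_unfold sorts del: lfun_vsc)
  also have "\<dots> = lin (\<lambda>i. lin (\<lambda>j. F1 (fst i) (fst j) (snd j)) (hc H1 (snd i))) (hc H1 g)"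
    by (rule coassoc_fs[OF H1])
  also have "\<dots> = A2_mul H1 H2 H' lt p ra co (bv (h,a,\<phi>)) (bv (g,b,\<psi>))"
    unfolding F1_def by (simp add: A2_bv act2_gen bcp_mul_bv push2 case_prod_unfold sorts rt_bv pair_mul vsc_lfun ac_simps del: lfun_vsc)
  finally show ?thesis .
qed


lemma counit_F2:
  assumes "hopf_algebra H"
  shows "lin (\<lambda>j. vsc (he H (snd j)) (F (fst j))) (hc H x) = F x"
proof -
  have ax: "lin (\<lambda>(a, b). vsc (he H b) (bv a)) (cop H (bv x)) = bv x"
    using assms unfolding hopf_algebra_def by blast
  have "lin F (lin (\<lambda>(a, b). vsc (he H b) (bv a)) (cop H (bv x))) = F x" by (simp only: ax lin_bv)
  then show ?thesis by (simp add: lin_lin lin_vsc case_prod_unfold)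
qed

lemma counit_F1:
  assumes "hopf_algebra H"
  shows "lin (\<lambda>j. vsc (he H (fst j)) (F (snd j))) (hc H x) = F x"
proof -
  have ax: "lin (\<lambda>(a, b). vsc (he H a) (bv b)) (cop H (bv x)) = bv x"
    using assms unfolding hopf_algebra_def by blast
  have "lin F (lin (\<lambda>(a, b). vsc (he H a) (bv b)) (cop H (bv x))) = F x" by (simp only: ax lin_bv)
  then show ?thesis by (simp add: lin_lin lin_vsc case_prod_unfold)
qed


lemma lm_id: "lin_map (\<lambda>x. x)" unfolding lin_map_def by simp
lemma lm_tens1: "lin_map f \<Longrightarrow> lin_map (\<lambda>x. tens (f x) y)" by (rule lin_map_comp[OF tens_map1])
lemma lm_tens2: "lin_map f \<Longrightarrow> lin_map (\<lambda>x. tens y (f x))" by (rule lin_map_comp[OF tens_map2])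
lemma lm_mul1: "lin_map f \<Longrightarrow> lin_map (\<lambda>x. mul H (f x) y)" by (rule lin_map_comp[OF mul_map1])
lemma lm_mul2: "lin_map f \<Longrightarrow> lin_map (\<lambda>x. mul H y (f x))" by (rule lin_map_comp[OF mul_map2])
lemma lm_lin2_1: "lin_map f \<Longrightarrow> lin_map (\<lambda>x. lin2 g (f x) y)" by (rule lin_map_comp[OF lin2_map1])
lemma lm_lin2_2: "lin_map f \<Longrightarrow> lin_map (\<lambda>x. lin2 g y (f x))" by (rule lin_map_comp[OF lin2_map2])
lemma lm_lin: "lin_map f \<Longrightarrow> lin_map (\<lambda>x. lin G (f x))" by (rule lin_map_comp[OF lin_map_lin])
lemma lm_assoc: "lin_map f \<Longrightarrow> lin_map (\<lambda>x. assoc_r (f x))" by (rule lin_map_comp[OF assoc_map])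
lemma lm_vsc: "lin_map f \<Longrightarrow> lin_map (\<lambda>x. vsc c (f x))"
  unfolding lin_map_def by (simp add: vsc_add mult.commute)
lemma lm_cop: "lin_map f \<Longrightarrow> lin_map (\<lambda>x. cop H (f x))" by (rule lin_map_comp[OF cop_map])
lemma lm_act1: "lin_map f \<Longrightarrow> lin_map (\<lambda>x. act1 H' p ra (f x) y)" unfolding act1_def by (rule lm_lin2_1)
lemma lm_act2: "lin_map f \<Longrightarrow> lin_map (\<lambda>x. act2 H1 lt p (f x) y)" unfolding act2_def by (rule lm_lin2_1)
lemma lm_act2b: "lin_map f \<Longrightarrow> lin_map (\<lambda>x. act2 H1 lt p y (f x))" unfolding act2_def by (rule lm_lin2_2)
lemma lm_bcp1: "lin_map f \<Longrightarrow> lin_map (\<lambda>x. bcp_mul H2 H' ra (f x) y)" unfolding bcp_mul_def by (rule lm_lin2_1)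
lemma lm_bcp2: "lin_map f \<Longrightarrow> lin_map (\<lambda>x. bcp_mul H2 H' ra y (f x))" unfolding bcp_mul_def by (rule lm_lin2_2)
lemma lm_dcp1: "lin_map f \<Longrightarrow> lin_map (\<lambda>x. dcp_mul H1 H2 lt rt (f x) y)" unfolding dcp_mul_def by (rule lm_lin2_1)
lemma lm_dcp2: "lin_map f \<Longrightarrow> lin_map (\<lambda>x. dcp_mul H1 H2 lt rt y (f x))" unfolding dcp_mul_def by (rule lm_lin2_2)
lemma lm_A1_1: "lin_map f \<Longrightarrow> lin_map (\<lambda>x. A1_mul H1 H2 H' lt rt p ra (f x) y)" unfolding A1_mul_def by (rule lm_lin2_1)
lemma lm_A1_2: "lin_map f \<Longrightarrow> lin_map (\<lambda>x. A1_mul H1 H2 H' lt rt p ra y (f x))" unfolding A1_mul_def by (rule lm_lin2_2)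
lemma lm_A2_1: "lin_map f \<Longrightarrow> lin_map (\<lambda>x. A2_mul H1 H2 H' lt p ra co (f x) y)" unfolding A2_mul_def by (rule lm_lin2_1)
lemma lm_A2_2: "lin_map f \<Longrightarrow> lin_map (\<lambda>x. A2_mul H1 H2 H' lt p ra co y (f x))" unfolding A2_mul_def by (rule lm_lin2_2)
lemma lm_emb_dcp: "lin_map f \<Longrightarrow> lin_map (\<lambda>x. emb_dcp H' (f x))" unfolding emb_dcp_def by (rule lm_lin)
lemma lm_emb_bcp: "lin_map f \<Longrightarrow> lin_map (\<lambda>x. emb_bcp H1 (f x))" unfolding emb_bcp_def by (rule lm_lin)
lemma lm_emb_hw: "lin_map f \<Longrightarrow> lin_map (\<lambda>x. emb_hw H2 (f x))" unfolding emb_hw_def by (rule lm_lin)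
lemma lm_hw1: "lin_map f \<Longrightarrow> lin_map (\<lambda>x. hw_mul H1 H' p (f x) y)" unfolding hw_mul_def by (rule lm_lin2_1)
lemma lm_hw2: "lin_map f \<Longrightarrow> lin_map (\<lambda>x. hw_mul H1 H' p y (f x))" unfolding hw_mul_def by (rule lm_lin2_2)

lemmas lm_intros = lm_id lm_tens1 lm_tens2 lm_mul1 lm_mul2 lm_lin2_1 lm_lin2_2 lm_lin lm_assoc lm_vsc lm_cop
  lm_act1 lm_act2 lm_act2b lm_bcp1 lm_bcp2 lm_dcp1 lm_dcp2 lm_A1_1 lm_A1_2 lm_A2_1 lm_A2_2 lm_emb_dcp lm_emb_bcp lm_emb_hw
  lm_hw1 lm_hw2

lemma lin_ext_sym: "lin_map G \<Longrightarrow> lin (\<lambda>l. G (bv l)) U = G U"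
  by (rule lin_ext[symmetric])

lemma bil_eqI:
  assumes "\<And>y. lin_map (\<lambda>x. B1 x y)" "\<And>x. lin_map (\<lambda>y. B1 x y)"
          "\<And>y. lin_map (\<lambda>x. B2 x y)" "\<And>x. lin_map (\<lambda>y. B2 x y)"
          "\<And>i j. B1 (bv i) (bv j) = B2 (bv i) (bv j)"
  shows "B1 u v = B2 u v"
proof -
  have "B1 (bv i) v = B2 (bv i) v" for i
    by (rule lin_eqI[OF assms(2) assms(4)]) (rule assms(5))
  then show ?thesis by (rule lin_eqI[OF assms(1) assms(3)])
qed

lemma lin_sum_fun: "lin (\<lambda>i. f i + g i) w = lin f w + lin g w"
  by (rule poly_mapping_eqI) (simp add: lookup_lin lookup_add sum.distrib algebra_simps)

lemma lm_param: assumes "\<And>i. lin_map (G i)" shows "lin_map (\<lambda>x. lin (\<lambda>i. G i x) w)"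
  using assms unfolding lin_map_def by (simp add: lin_sum_fun vsc_push)

lemma dcp_push2: "dcp_mul H1 H2 lt rt x (lin F u) = lin (\<lambda>i. dcp_mul H1 H2 lt rt x (F i)) u"
  by (rule lin_push[OF lm_dcp2[OF lm_id]])
lemma dcp_vsc2: "dcp_mul H1 H2 lt rt x (vsc c u) = vsc c (dcp_mul H1 H2 lt rt x u)"
  by (rule lin_map_vsc[OF lm_dcp2[OF lm_id]])
lemma bcp_push1: "bcp_mul H2 H' ra (lin F u) y = lin (\<lambda>i. bcp_mul H2 H' ra (F i) y) u"
  by (rule lin_push[OF lm_bcp1[OF lm_id]])
lemma bcp_vsc1: "bcp_mul H2 H' ra (vsc c u) y = vsc c (bcp_mul H2 H' ra u y)"
  by (rule lin_map_vsc[OF lm_bcp1[OF lm_id]])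
lemma emb_dcp_push: "emb_dcp H' (lin F u) = lin (\<lambda>i. emb_dcp H' (F i)) u"
  by (rule lin_push[OF lm_emb_dcp[OF lm_id]])
lemma emb_dcp_vsc: "emb_dcp H' (vsc c u) = vsc c (emb_dcp H' u)"
  by (rule lin_map_vsc[OF lm_emb_dcp[OF lm_id]])
lemma emb_hw_push: "emb_hw H2 (lin F u) = lin (\<lambda>i. emb_hw H2 (F i)) u"
  by (rule lin_push[OF lm_emb_hw[OF lm_id]])
lemma emb_hw_vsc: "emb_hw H2 (vsc c u) = vsc c (emb_hw H2 u)"
  by (rule lin_map_vsc[OF lm_emb_hw[OF lm_id]])
lemma A1_push1: "A1_mul H1 H2 H' lt rt p ra (lin F u) y = lin (\<lambda>i. A1_mul H1 H2 H' lt rt p ra (F i) y) u"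
  by (rule lin_push[OF lm_A1_1[OF lm_id]])
lemma A1_push2: "A1_mul H1 H2 H' lt rt p ra x (lin F u) = lin (\<lambda>i. A1_mul H1 H2 H' lt rt p ra x (F i)) u"
  by (rule lin_push[OF lm_A1_2[OF lm_id]])
lemma A2_push1: "A2_mul H1 H2 H' lt p ra co (lin F u) y = lin (\<lambda>i. A2_mul H1 H2 H' lt p ra co (F i) y) u"
  by (rule lin_push[OF lm_A2_1[OF lm_id]])
lemma A2_push2: "A2_mul H1 H2 H' lt p ra co x (lin F u) = lin (\<lambda>i. A2_mul H1 H2 H' lt p ra co x (F i)) u"
  by (rule lin_push[OF lm_A2_2[OF lm_id]])

lemma emb_dcp_eq: "emb_dcp H' X = assoc_r (tens X (hu H'))"
proof (rule lin_eqI[OF lm_emb_dcp[OF lm_id] lm_assoc[OF lm_tens1[OF lm_id]]])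
  fix i
  obtain x y where i: "i = (x,y)" by (cases i)
  have "emb_dcp H' (bv (x,y)) = tens (bv x) (tens (bv y) (hu H'))" unfolding emb_dcp_def by simp
  also have "\<dots> = assoc_r (tens (tens (bv x) (bv y)) (hu H'))" by (simp only: assoc_tens)
  finally show "emb_dcp H' (bv i) = assoc_r (tens (bv i) (hu H'))" by (simp only: i tens_bv)
qed

lemma emb_bcp_eq: "emb_bcp H1 X = tens (hu H1) X"
proof (rule lin_eqI[OF lm_emb_bcp[OF lm_id] lm_tens2[OF lm_id]])
  fix i
  obtain x y where i: "i = (x,y)" by (cases i)
  show "emb_bcp H1 (bv i) = tens (hu H1) (bv i)" unfolding emb_bcp_def by (simp only: i lin_bv split_conv tens_bv)
qed

lemma emb_hw_tens: "emb_hw H2 (tens X Y) = tens X (tens (hu H2) Y)"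
proof -
  have "emb_hw H2 (tens X (bv j)) = tens X (tens (hu H2) (bv j))" for j
  proof (rule lin_eqI[OF lm_emb_hw[OF lm_tens1[OF lm_id]] lm_tens1[OF lm_id]])
    fix i show "emb_hw H2 (tens (bv i) (bv j)) = tens (bv i) (tens (hu H2) (bv j))"
      unfolding emb_hw_def by (simp only: tens_bv lin_bv split_conv)
  qed
  then show ?thesis
    by (rule lin_eqI[OF lm_emb_hw[OF lm_tens2[OF lm_id]] lm_tens2[OF lm_tens2[OF lm_id]]])
qed


lemma counit2P: assumes "hopf_algebra H"
  shows "lin (\<lambda>j. vsc (c * he H (snd j)) (F z (fst j))) (hc H x) = vsc c (F z x)"
  using counit_F2[OF assms, of "\<lambda>y. vsc c (F z y)" x] by (simp add: mult.commute)
lemma counit2Q: assumes "hopf_algebra H"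
  shows "lin (\<lambda>j. vsc (he H (snd j)) (F z (fst j))) (hc H x) = F z x"
  using counit_F2[OF assms, of "\<lambda>y. F z y" x] by (simp add: mult.commute)
lemma counit1P: assumes "hopf_algebra H"
  shows "lin (\<lambda>j. vsc (c * he H (fst j)) (F z (snd j))) (hc H x) = vsc c (F z x)"
  using counit_F1[OF assms, of "\<lambda>y. vsc c (F z y)" x] by (simp add: mult.commute)
lemma counit1Q: assumes "hopf_algebra H"
  shows "lin (\<lambda>j. vsc (he H (fst j)) (F z (snd j))) (hc H x) = F z x"
  using counit_F1[OF assms, of "\<lambda>y. F z y" x] by (simp add: mult.commute)

lemma hopf_facts:
  assumes "hopf_algebra H"
  shows "mul H x (hu H) = x" "mul H (hu H) x = x" "cop H (hu H) = tens (hu H) (hu H)"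
        "eps H (mul H x y) = eps H x * eps H y" "eps H (hu H) = 1"
  using assms unfolding hopf_algebra_def by blast+

lemma lfun_diff: "lfun f (x - y) = lfun f x - lfun f y"
  using lfun_add[of f "x - y" y] by simp

lemma nondeg_eq:
  assumes "nondegenerate p" "\<And>h. pair p x h = pair p y h"
  shows "x = y"
proof -
  have "pair p (x - y) h = 0" for h
    using assms(2)[of h] unfolding pair_def by (simp add: lfun_diff)
  then have "x - y = 0" using assms(1) unfolding nondegenerate_def by blast
  then show ?thesis by simp
qed

lemma dcp_counit:
  assumes "hopf_algebra H1" "hopf_algebra H2"
  shows "lin (\<lambda>y. vsc (he H1 (fst (snd y)) * he H2 (snd (snd y))) (bv (fst y))) (dcp_cop H1 H2 (bv (g,b))) = bv (g,b)"
proof -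
  have "lin (\<lambda>y. vsc (he H1 (fst (snd y)) * he H2 (snd (snd y))) (bv (fst y))) (dcp_cop H1 H2 (bv (g,b)))
     = lin (\<lambda>i. lin (\<lambda>j. vsc (he H1 (snd i) * he H2 (snd j)) (bv (fst i, fst j))) (hc H2 b)) (hc H1 g)"
    by (simp add: dcp_cop_bv lin_lin case_prod_unfold)
  also have "\<dots> = lin (\<lambda>i. vsc (he H1 (snd i)) (bv (fst i, b))) (hc H1 g)"
    by (simp only: counit2P[OF assms(2), where F = "\<lambda>z y. bv (z, y)"])
  also have "\<dots> = bv (g, b)"
    by (simp only: counit2Q[OF assms(1), where F = "\<lambda>z y. bv (y, z)"])
  finally show ?thesis .
qed


lemma lfun_cmult2: "lfun (\<lambda>i. f i * c) u = lfun f u * c"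
  unfolding lfun_def by (subst sum_distrib_right) (simp add: mult.assoc)

lemma mp_facts:
  assumes "matched_pair H1 H2 lt rt"
  shows "\<And>a h. eps H1 (lin2 lt a h) = eps H2 a * eps H1 h"
        "\<And>h. lin2 lt (hu H2) h = h"
        "\<And>a. lin2 lt a (hu H1) = vsc (eps H2 a) (hu H1)"
        "\<And>h. lin2 rt (hu H2) h = vsc (eps H1 h) (hu H2)"
        "\<And>a. lin2 rt a (hu H1) = a"
  using assms unfolding matched_pair_def Let_def by (elim conjE, simp only:)+

lemma dp_facts:
  assumes "dual_pairing H' H1 p"
  shows "\<And>h. pair p (hu H') h = eps H1 h" "\<And>\<phi>. pair p \<phi> (hu H1) = eps H' \<phi>"
        "\<And>\<phi> \<psi> h. pair p (mul H' \<phi> \<psi>) h = pairT p (tens \<phi> \<psi>) (cop H1 h)"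
  using assms unfolding dual_pairing_def by (elim conjE, simp only:)+

lemma ra_unit1:
  assumes mp: "matched_pair H1 H2 lt rt" and dp: "dual_pairing H' H1 p" and nd: "nondegenerate p"
    and ra_dual: "\<forall>\<phi> a h. pair p (lin2 ra \<phi> a) h = pair p \<phi> (lin2 lt a h)"
  shows "lin2 ra (hu H') (bv b) = vsc (he H2 b) (hu H')"
proof (rule nondeg_eq[OF nd])
  fix h
  have "pair p (lin2 ra (hu H') (bv b)) h = eps H1 (lin2 lt (bv b) h)"
    using ra_dual dp_facts(1)[OF dp] by (simp del: lin2_bv1 lin2_bv2)
  also have "\<dots> = he H2 b * eps H1 h" by (simp del: lin2_bv1 lin2_bv2 add: mp_facts(1)[OF mp])
  also have "\<dots> = pair p (vsc (he H2 b) (hu H')) h" by (simp add: pair_vsc1 dp_facts(1)[OF dp])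
  finally show "pair p (lin2 ra (hu H') (bv b)) h = pair p (vsc (he H2 b) (hu H')) h" .
qed

lemma ra_unit2:
  assumes mp: "matched_pair H1 H2 lt rt" and nd: "nondegenerate p"
    and ra_dual: "\<forall>\<phi> a h. pair p (lin2 ra \<phi> a) h = pair p \<phi> (lin2 lt a h)"
  shows "lin2 ra x (hu H2) = x"
proof (rule nondeg_eq[OF nd])
  fix h show "pair p (lin2 ra x (hu H2)) h = pair p x h"
    using ra_dual mp_facts(2)[OF mp] by (simp del: lin2_bv1 lin2_bv2)
qed

lemma act1_unit:
  assumes mp: "matched_pair H1 H2 lt rt" and dp: "dual_pairing H' H1 p" and nd: "nondegenerate p"
    and ra_dual: "\<forall>\<phi> a h. pair p (lin2 ra \<phi> a) h = pair p \<phi> (lin2 lt a h)"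
    and H': "hopf_algebra H'"
  shows "act1 H' p ra (hu H') (bv (g,b)) = vsc (he H1 g * he H2 b) (hu H')"
proof -
  have "act1 H' p ra (hu H') (bv (g,b)) = lin (\<lambda>\<phi>. act1 H' p ra (bv \<phi>) (bv (g,b))) (hu H')"
    by (rule lin_ext[OF lm_act1[OF lm_id]])
  also have "\<dots> = lin (\<lambda>j. vsc (p (fst j) g) (ra (snd j) b)) (cop H' (hu H'))"
    by (simp add: act1_bv cop_def lin_lin case_prod_unfold)
  also have "\<dots> = lin (\<lambda>j1. vsc (p j1 g) (lin2 ra (hu H') (bv b))) (hu H')"
    by (simp add: hopf_facts(3)[OF H'] lin_tens vsc_push)
  also have "\<dots> = vsc (pair p (hu H') (bv g)) (vsc (he H2 b) (hu H'))"
    by (simp del: lin2_bv1 lin2_bv2 add: ra_unit1[OF mp dp nd ra_dual] lin_vsc_fold pair_def lfun_cmult2)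
  also have "\<dots> = vsc (he H1 g * he H2 b) (hu H')"
    by (simp add: dp_facts(1)[OF dp])
  finally show ?thesis .
qed

lemma A1_gen3:
  "A1_mul H1 H2 H' lt rt p ra (tens (bv h) (tens (bv a) U)) (tens (bv g) (tens (bv b) V)) =
   lin (\<lambda>y. assoc_r (tens (dcp_mul H1 H2 lt rt (bv (h,a)) (bv (fst y))) (mul H' (act1 H' p ra U (bv (snd y))) V))) (dcp_cop H1 H2 (bv (g,b)))"
proof -
  define B1 where "B1 = (\<lambda>U V. A1_mul H1 H2 H' lt rt p ra (tens (bv h) (tens (bv a) U)) (tens (bv g) (tens (bv b) V)))"
  define B2 where "B2 = (\<lambda>U V. lin (\<lambda>y. assoc_r (tens (dcp_mul H1 H2 lt rt (bv (h,a)) (bv (fst y))) (mul H' (act1 H' p ra U (bv (snd y))) V))) (dcp_cop H1 H2 (bv (g,b))))"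
  have "B1 U V = B2 U V"
  proof (rule bil_eqI[where ?B1.0 = B1 and ?B2.0 = B2])
    show "lin_map (\<lambda>x. B1 x y)" for y unfolding B1_def by (intro lm_A1_1 lm_tens2 lm_id)
    show "lin_map (\<lambda>y. B1 x y)" for x unfolding B1_def by (intro lm_A1_2 lm_tens2 lm_id)
    show "lin_map (\<lambda>x. B2 x y)" for y unfolding B2_def by (intro lm_param lm_assoc lm_tens2 lm_mul1 lm_act1 lm_id)
    show "lin_map (\<lambda>y. B2 x y)" for x unfolding B2_def by (intro lm_param lm_assoc lm_tens2 lm_mul2 lm_id)
    show "B1 (bv i) (bv j) = B2 (bv i) (bv j)" for i j
      unfolding B1_def B2_def by (simp add: A1_bv case_prod_unfold)
  qed
  then show ?thesis unfolding B1_def B2_def .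
qed


lemma act1_unit':
  assumes mp: "matched_pair H1 H2 lt rt" and dp: "dual_pairing H' H1 p" and nd: "nondegenerate p"
    and ra_dual: "\<forall>\<phi> a h. pair p (lin2 ra \<phi> a) h = pair p \<phi> (lin2 lt a h)"
    and H': "hopf_algebra H'"
  shows "act1 H' p ra (hu H') (bv z) = vsc (he H1 (fst z) * he H2 (snd z)) (hu H')"
  using act1_unit[OF assms, of "fst z" "snd z"] by simp

lemma dcp_basis:
  assumes H1: "hopf_algebra H1" and H2: "hopf_algebra H2" and H': "hopf_algebra H'"
    and mp: "matched_pair H1 H2 lt rt" and dp: "dual_pairing H' H1 p" and nd: "nondegenerate p"
    and ra_dual: "\<forall>\<phi> a h. pair p (lin2 ra \<phi> a) h = pair p \<phi> (lin2 lt a h)"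
  shows "emb_dcp H' (dcp_mul H1 H2 lt rt (bv (h,a)) (bv (g,b))) =
         A1_mul H1 H2 H' lt rt p ra (emb_dcp H' (bv (h,a))) (emb_dcp H' (bv (g,b)))"
proof -
  have e: "emb_dcp H' (bv (x,y)) = tens (bv x) (tens (bv y) (hu H'))" for x y by (simp add: emb_dcp_def)
  have "A1_mul H1 H2 H' lt rt p ra (emb_dcp H' (bv (h,a))) (emb_dcp H' (bv (g,b))) =
        A1_mul H1 H2 H' lt rt p ra (tens (bv h) (tens (bv a) (hu H'))) (tens (bv g) (tens (bv b) (hu H')))"
    by (simp only: e)
  also have "\<dots> = lin (\<lambda>y. assoc_r (tens (dcp_mul H1 H2 lt rt (bv (h,a)) (bv (fst y))) (mul H' (act1 H' p ra (hu H') (bv (snd y))) (hu H')))) (dcp_cop H1 H2 (bv (g,b)))"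
    by (rule A1_gen3)
  also have "\<dots> = lin (\<lambda>y. vsc (he H1 (fst (snd y)) * he H2 (snd (snd y))) (emb_dcp H' (dcp_mul H1 H2 lt rt (bv (h,a)) (bv (fst y))))) (dcp_cop H1 H2 (bv (g,b)))"
    by (simp add: act1_unit'[OF mp dp nd ra_dual H'] lin_map_vsc[OF mul_map1] lin_map_vsc[OF tens_map2] lin_map_vsc[OF assoc_map]
       hopf_facts[OF H'] emb_dcp_eq del: vsc_vsc)
  also have "\<dots> = emb_dcp H' (dcp_mul H1 H2 lt rt (bv (h,a)) (lin (\<lambda>y. vsc (he H1 (fst (snd y)) * he H2 (snd (snd y))) (bv (fst y))) (dcp_cop H1 H2 (bv (g,b)))))"
    by (simp only: dcp_push2 dcp_vsc2 emb_dcp_push emb_dcp_vsc)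
  also have "\<dots> = emb_dcp H' (dcp_mul H1 H2 lt rt (bv (h,a)) (bv (g,b)))"
    by (simp only: dcp_counit[OF H1 H2])
  finally show ?thesis by simp
qed


lemma co_counit_F:
  assumes counit: "\<forall>a. lin (\<lambda>(c, b). vsc (he H' c) (bv b)) (lin co a) = a"
  shows "lin (\<lambda>k. vsc (he H' (fst k)) (F (snd k))) (co x) = F x"
proof -
  have ax: "lin (\<lambda>(c, b). vsc (he H' c) (bv b)) (co x) = bv x" using counit[rule_format, of "bv x"] by simp
  have "lin F (lin (\<lambda>(c, b). vsc (he H' c) (bv b)) (co x)) = F x" by (simp only: ax lin_bv)
  then show ?thesis by (simp add: lin_lin lin_vsc case_prod_unfold)
qed

lemma co_counitP:
  assumes counit: "\<forall>a. lin (\<lambda>(c, b). vsc (he H' c) (bv b)) (lin co a) = a"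
  shows "lin (\<lambda>k. vsc (C * he H' (fst k)) (F z (snd k))) (co x) = vsc C (F z x)"
  using co_counit_F[OF counit, of "\<lambda>y. vsc C (F z y)" x] by (simp add: mult.commute)

lemma lfun_tens: "lfun f (tens u v) = lfun (\<lambda>i. lfun (\<lambda>j. f (i, j)) v) u"
  unfolding tens_def lin2_def by (simp add: lfun_lin)

lemma bcp_counit:
  assumes H2: "hopf_algebra H2" and H': "hopf_algebra H'"
    and counit: "\<forall>a. lin (\<lambda>(c, b). vsc (he H' c) (bv b)) (lin co a) = a"
  shows "lin (\<lambda>z. vsc (he H2 (fst (fst z)) * he H' (snd (fst z))) (bv (snd z))) (bcp_cop H2 H' co (bv (a,\<phi>))) = bv (a,\<phi>)"
proof -
  have "lin (\<lambda>z. vsc (he H2 (fst (fst z)) * he H' (snd (fst z))) (bv (snd z))) (bcp_cop H2 H' co (bv (a,\<phi>))) =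
    lin (\<lambda>i. lin (\<lambda>j. lin (\<lambda>k. vsc ((he H2 (fst i) * he H' (fst j)) * he H' (fst k)) (bv (snd k, snd j))) (co (snd i))) (hc H' \<phi>)) (hc H2 a)"
    by (simp add: bcp_cop_bv lin_lin lin_tens lin_vsc_fold case_prod_unfold lfun_cmult lfun_tens eps_def[symmetric] hopf_facts(4)[OF H'] mult_ac)
  also have "\<dots> = lin (\<lambda>i. lin (\<lambda>j. vsc (he H2 (fst i) * he H' (fst j)) (bv (snd i, snd j))) (hc H' \<phi>)) (hc H2 a)"
    by (simp only: co_counitP[OF counit, where F = "\<lambda>z y. bv (y, z)"])
  also have "\<dots> = lin (\<lambda>i. vsc (he H2 (fst i)) (bv (snd i, \<phi>))) (hc H2 a)"
    by (simp only: counit1P[OF H', where F = "\<lambda>z y. bv (z, y)"])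
  also have "\<dots> = bv (a,\<phi>)"
    by (simp only: counit1Q[OF H2, where F = "\<lambda>z y. bv (y, z)"])
  finally show ?thesis .
qed


lemma A2_gen1:
  "A2_mul H1 H2 H' lt p ra co (tens U (bv X)) (tens V (bv Y)) =
   lin (\<lambda>z. tens (mul H1 U (act2 H1 lt p (bv (fst z)) V)) (bcp_mul H2 H' ra (bv (snd z)) (bv Y))) (bcp_cop H2 H' co (bv X))"
proof -
  define B1 where "B1 = (\<lambda>U V. A2_mul H1 H2 H' lt p ra co (tens U (bv X)) (tens V (bv Y)))"
  define B2 where "B2 = (\<lambda>U V. lin (\<lambda>z. tens (mul H1 U (act2 H1 lt p (bv (fst z)) V)) (bcp_mul H2 H' ra (bv (snd z)) (bv Y))) (bcp_cop H2 H' co (bv X)))"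
  have "B1 U V = B2 U V"
  proof (rule bil_eqI[where ?B1.0 = B1 and ?B2.0 = B2])
    show "lin_map (\<lambda>x. B1 x y)" for y unfolding B1_def by (intro lm_A2_1 lm_tens1 lm_id)
    show "lin_map (\<lambda>y. B1 x y)" for x unfolding B1_def by (intro lm_A2_2 lm_tens1 lm_id)
    show "lin_map (\<lambda>x. B2 x y)" for y unfolding B2_def by (intro lm_param lm_tens1 lm_mul1 lm_id)
    show "lin_map (\<lambda>y. B2 x y)" for x unfolding B2_def by (intro lm_param lm_tens1 lm_mul2 lm_act2b lm_id)
    show "B1 (bv i) (bv j) = B2 (bv i) (bv j)" for i j
      unfolding B1_def B2_def by (simp add: A2_mul_def case_prod_unfold)
  qed
  then show ?thesis unfolding B1_def B2_def .
qed

lemma act2_unit: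
  assumes mp: "matched_pair H1 H2 lt rt" and dp: "dual_pairing H' H1 p" and H1: "hopf_algebra H1"
  shows "act2 H1 lt p (bv z) (hu H1) = vsc (he H2 (fst z) * he H' (snd z)) (hu H1)"
proof -
  have l: "lin (lt a) (hu H1) = vsc (he H2 a) (hu H1)" for a
    using mp_facts(3)[OF mp, of "bv a"] by simp
  have q: "lfun (p \<phi>) (hu H1) = he H' \<phi>" for \<phi>
    using dp_facts(2)[OF dp, of "bv \<phi>"] by simp
  have "act2 H1 lt p (bv z) (hu H1) = lin (\<lambda>h. act2 H1 lt p (bv z) (bv h)) (hu H1)"
    by (rule lin_ext[OF lm_act2b[OF lm_id]])
  also have "\<dots> = lin (\<lambda>j. vsc (p (snd z) (snd j)) (lt (fst z) (fst j))) (cop H1 (hu H1))"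
    by (simp add: act2_def cop_def lin_lin case_prod_unfold)
  also have "\<dots> = lin (\<lambda>j1. vsc (lfun (p (snd z)) (hu H1)) (lt (fst z) j1)) (hu H1)"
    by (simp add: hopf_facts(3)[OF H1] lin_tens lin_vsc_fold)
  also have "\<dots> = vsc (he H2 (fst z) * he H' (snd z)) (hu H1)"
    by (simp add: q flip: vsc_push) (simp add: l mult.commute)
  finally show ?thesis .
qed

lemma bcp_basis:
  assumes H1: "hopf_algebra H1" and H2: "hopf_algebra H2" and H': "hopf_algebra H'"
    and mp: "matched_pair H1 H2 lt rt" and dp: "dual_pairing H' H1 p"
    and counit: "\<forall>a. lin (\<lambda>(c, b). vsc (he H' c) (bv b)) (lin co a) = a"
  shows "emb_bcp H1 (bcp_mul H2 H' ra (bv (a,\<phi>)) (bv (b,\<psi>))) =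
         A2_mul H1 H2 H' lt p ra co (emb_bcp H1 (bv (a,\<phi>))) (emb_bcp H1 (bv (b,\<psi>)))"
proof -
  have "A2_mul H1 H2 H' lt p ra co (emb_bcp H1 (bv (a,\<phi>))) (emb_bcp H1 (bv (b,\<psi>))) =
        A2_mul H1 H2 H' lt p ra co (tens (hu H1) (bv (a,\<phi>))) (tens (hu H1) (bv (b,\<psi>)))"
    by (simp only: emb_bcp_eq)
  also have "\<dots> = lin (\<lambda>z. tens (mul H1 (hu H1) (act2 H1 lt p (bv (fst z)) (hu H1))) (bcp_mul H2 H' ra (bv (snd z)) (bv (b,\<psi>)))) (bcp_cop H2 H' co (bv (a,\<phi>)))"
    by (rule A2_gen1)
  also have "\<dots> = lin (\<lambda>z. vsc (he H2 (fst (fst z)) * he H' (snd (fst z))) (tens (hu H1) (bcp_mul H2 H' ra (bv (snd z)) (bv (b,\<psi>))))) (bcp_cop H2 H' co (bv (a,\<phi>)))"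
    by (simp only: act2_unit[OF mp dp H1] hopf_facts(2)[OF H1] lin_map_vsc[OF tens_map1])
  also have "\<dots> = tens (hu H1) (bcp_mul H2 H' ra (lin (\<lambda>z. vsc (he H2 (fst (fst z)) * he H' (snd (fst z))) (bv (snd z))) (bcp_cop H2 H' co (bv (a,\<phi>)))) (bv (b,\<psi>)))"
    by (simp only: bcp_push1 bcp_vsc1 lin_push[OF tens_map2] lin_map_vsc[OF tens_map2])
  also have "\<dots> = tens (hu H1) (bcp_mul H2 H' ra (bv (a,\<phi>)) (bv (b,\<psi>)))"
    by (simp only: bcp_counit[OF H2 H' counit])
  finally show ?thesis by (simp add: emb_bcp_eq)
qed


lemma lm_act1b: "lin_map f \<Longrightarrow> lin_map (\<lambda>x. act1 H' p ra y (f x))" unfolding act1_def by (rule lm_lin2_2)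
lemma lm_dcpcop: "lin_map f \<Longrightarrow> lin_map (\<lambda>x. dcp_cop H1 H2 (f x))" unfolding dcp_cop_def by (rule lm_lin)

lemma act1_gen2:
  "act1 H' p ra (bv \<phi>) (tens (bv g) V) = lin (\<lambda>k. vsc (p (fst k) g) (lin2 ra (bv (snd k)) V)) (hc H' \<phi>)"
proof (rule lin_eqI[where ?g1.0 = "\<lambda>V. act1 H' p ra (bv \<phi>) (tens (bv g) V)" and ?g2.0 = "\<lambda>V. lin (\<lambda>k. vsc (p (fst k) g) (lin2 ra (bv (snd k)) V)) (hc H' \<phi>)"])
  show "lin_map (\<lambda>V. act1 H' p ra (bv \<phi>) (tens (bv g) V))" by (intro lm_act1b lm_tens2 lm_id)
  show "lin_map (\<lambda>V. lin (\<lambda>k. vsc (p (fst k) g) (lin2 ra (bv (snd k)) V)) (hc H' \<phi>))" by (intro lm_param lm_vsc lm_lin2_2 lm_id)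
  show "act1 H' p ra (bv \<phi>) (tens (bv g) (bv i)) = lin (\<lambda>k. vsc (p (fst k) g) (lin2 ra (bv (snd k)) (bv i))) (hc H' \<phi>)" for i
    by (simp add: act1_bv case_prod_unfold)
qed

lemma DM_gen:
  "dcp_mul H1 H2 lt rt (tens (bv h) U) (tens (bv g) V) =
   lin (\<lambda>i. lin (\<lambda>j. tens (mul H1 (bv h) (lin2 lt (bv (fst i)) (bv (fst j)))) (mul H2 (lin2 rt (bv (snd i)) (bv (snd j))) V)) (hc H1 g)) (cop H2 U)"
proof -
  define B1 where "B1 = (\<lambda>U V. dcp_mul H1 H2 lt rt (tens (bv h) U) (tens (bv g) V))"
  define B2 where "B2 = (\<lambda>U V. lin (\<lambda>i. lin (\<lambda>j. tens (mul H1 (bv h) (lin2 lt (bv (fst i)) (bv (fst j)))) (mul H2 (lin2 rt (bv (snd i)) (bv (snd j))) V)) (hc H1 g)) (cop H2 U))"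
  have "B1 U V = B2 U V"
  proof (rule bil_eqI[where ?B1.0 = B1 and ?B2.0 = B2])
    show "lin_map (\<lambda>x. B1 x y)" for y unfolding B1_def by (intro lm_dcp1 lm_tens2 lm_id)
    show "lin_map (\<lambda>y. B1 x y)" for x unfolding B1_def by (intro lm_dcp2 lm_tens2 lm_id)
    show "lin_map (\<lambda>x. B2 x y)" for y unfolding B2_def by (intro lm_lin lm_cop lm_id)
    show "lin_map (\<lambda>y. B2 x y)" for x unfolding B2_def by (intro lm_param lm_tens2 lm_mul2 lm_id)
    show "B1 (bv i) (bv j) = B2 (bv i) (bv j)" for i j
      unfolding B1_def B2_def by (simp add: dcp_mul_bv case_prod_unfold)
  qed
  then show ?thesis unfolding B1_def B2_def .
qed

lemma dcp_unit:
  assumes H1: "hopf_algebra H1" and H2: "hopf_algebra H2" and mp: "matched_pair H1 H2 lt rt"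
  shows "dcp_mul H1 H2 lt rt (tens (bv h) (hu H2)) (tens (bv g) (hu H2)) = tens (mul H1 (bv h) (bv g)) (hu H2)"
proof -
  define B where "B = (\<lambda>X Y. lin (\<lambda>j. tens (mul H1 (bv h) (lin2 lt X (bv (fst j)))) (mul H2 (lin2 rt Y (bv (snd j))) (hu H2))) (hc H1 g))"
  have b1: "lin_map (\<lambda>x. B x y)" for y unfolding B_def by (intro lm_param lm_tens1 lm_mul2 lm_lin2_1 lm_id)
  have b2: "lin_map (\<lambda>y. B x y)" for x unfolding B_def by (intro lm_param lm_tens2 lm_mul1 lm_lin2_1 lm_id)
  have "dcp_mul H1 H2 lt rt (tens (bv h) (hu H2)) (tens (bv g) (hu H2)) = lin (\<lambda>(i1,i2). B (bv i1) (bv i2)) (cop H2 (hu H2))"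
    unfolding DM_gen B_def by (simp only: case_prod_unfold)
  also have "\<dots> = B (hu H2) (hu H2)"
    by (simp only: hopf_facts(3)[OF H2] tens_lin_bil[OF b1 b2])
  also have "\<dots> = lin (\<lambda>j. vsc (he H1 (snd j)) (tens (mul H1 (bv h) (bv (fst j))) (hu H2))) (hc H1 g)"
    unfolding B_def by (simp only: mp_facts(2,4)[OF mp] eps_bv lin_map_vsc[OF mul_map1] hopf_facts(2)[OF H2] lin_map_vsc[OF tens_map2])
  also have "\<dots> = tens (mul H1 (bv h) (bv g)) (hu H2)"
    by (simp only: counit2Q[OF H1, where F = "\<lambda>z y. tens (mul H1 (bv z) (bv y)) (hu H2)"])
  finally show ?thesis .
qed


lemma A1_gen2:
  "A1_mul H1 H2 H' lt rt p ra (tens (bv h) (tens U (bv \<phi>))) (tens (bv g) (tens V (bv \<psi>))) =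
   lin (\<lambda>y. assoc_r (tens (dcp_mul H1 H2 lt rt (tens (bv h) U) (bv (fst y))) (mul H' (act1 H' p ra (bv \<phi>) (bv (snd y))) (bv \<psi>)))) (dcp_cop H1 H2 (tens (bv g) V))"
proof -
  define B1 where "B1 = (\<lambda>U V. A1_mul H1 H2 H' lt rt p ra (tens (bv h) (tens U (bv \<phi>))) (tens (bv g) (tens V (bv \<psi>))))"
  define B2 where "B2 = (\<lambda>U V. lin (\<lambda>y. assoc_r (tens (dcp_mul H1 H2 lt rt (tens (bv h) U) (bv (fst y))) (mul H' (act1 H' p ra (bv \<phi>) (bv (snd y))) (bv \<psi>)))) (dcp_cop H1 H2 (tens (bv g) V)))"
  have "B1 U V = B2 U V"
  proof (rule bil_eqI[where ?B1.0 = B1 and ?B2.0 = B2])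
    show "lin_map (\<lambda>x. B1 x y)" for y unfolding B1_def by (intro lm_A1_1 lm_tens2 lm_tens1 lm_id)
    show "lin_map (\<lambda>y. B1 x y)" for x unfolding B1_def by (intro lm_A1_2 lm_tens2 lm_tens1 lm_id)
    show "lin_map (\<lambda>x. B2 x y)" for y unfolding B2_def by (intro lm_param lm_assoc lm_tens1 lm_dcp1 lm_tens2 lm_id)
    show "lin_map (\<lambda>y. B2 x y)" for x unfolding B2_def by (intro lm_lin lm_dcpcop lm_tens2 lm_id)
    show "B1 (bv i) (bv j) = B2 (bv i) (bv j)" for i j
      unfolding B1_def B2_def by (simp add: A1_bv case_prod_unfold)
  qed
  then show ?thesis unfolding B1_def B2_def .
qed

lemma tens_bv_left: "tens (bv i) v = lin (\<lambda>j. bv (i, j)) v"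
  unfolding tens_def by simp

lemma dcp_cop_unit:
  assumes H2: "hopf_algebra H2"
  shows "dcp_cop H1 H2 (tens (bv g) (hu H2)) = lin (\<lambda>j. tens (tens (bv (fst j)) (hu H2)) (tens (bv (snd j)) (hu H2))) (hc H1 g)"
proof -
  have "dcp_cop H1 H2 (tens (bv g) (hu H2)) = lin (\<lambda>k. dcp_cop H1 H2 (bv (g,k))) (hu H2)"
    unfolding tens_bv_left by (rule lin_push[OF lm_dcpcop[OF lm_id]])
  also have "\<dots> = lin (\<lambda>k. lin (\<lambda>i. lin (\<lambda>j. bv ((fst i, fst j), (snd i, snd j))) (hc H2 k)) (hc H1 g)) (hu H2)"
    by (simp only: dcp_cop_bv case_prod_unfold)
  also have "\<dots> = lin (\<lambda>i. lin (\<lambda>k. lin (\<lambda>j. bv ((fst i, fst j), (snd i, snd j))) (hc H2 k)) (hu H2)) (hc H1 g)"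
    by (rule lin_swap)
  also have "\<dots> = lin (\<lambda>i. lin (\<lambda>j. bv ((fst i, fst j), (snd i, snd j))) (cop H2 (hu H2))) (hc H1 g)"
    by (simp only: cop_def lin_lin)
  also have "\<dots> = lin (\<lambda>j. tens (tens (bv (fst j)) (hu H2)) (tens (bv (snd j)) (hu H2))) (hc H1 g)"
    by (simp add: hopf_facts(3)[OF H2] lin_tens tens_bv_left push2 del: tens_bv) (rule lin_cong, rule lin_swap)
  finally show ?thesis .
qed

lemma hw_basis:
  assumes H1: "hopf_algebra H1" and H2: "hopf_algebra H2" and H': "hopf_algebra H'"
    and mp: "matched_pair H1 H2 lt rt" and nd: "nondegenerate p"
    and ra_dual: "\<forall>\<phi> a h. pair p (lin2 ra \<phi> a) h = pair p \<phi> (lin2 lt a h)"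
  shows "emb_hw H2 (hw_mul H1 H' p (bv (h,\<phi>)) (bv (g,\<psi>))) =
         A1_mul H1 H2 H' lt rt p ra (emb_hw H2 (bv (h,\<phi>))) (emb_hw H2 (bv (g,\<psi>)))"
proof -
  have e: "emb_hw H2 (bv (x,y)) = tens (bv x) (tens (hu H2) (bv y))" for x y by (simp add: emb_hw_def)
  define B where "B = (\<lambda>Y1 Y2. assoc_r (tens (dcp_mul H1 H2 lt rt (tens (bv h) (hu H2)) Y1) (mul H' (act1 H' p ra (bv \<phi>) Y2) (bv \<psi>))))"
  have b1: "lin_map (\<lambda>x. B x y)" for y unfolding B_def by (intro lm_assoc lm_tens1 lm_dcp2 lm_id)
  have b2: "lin_map (\<lambda>y. B x y)" for x unfolding B_def by (intro lm_assoc lm_tens2 lm_mul1 lm_act1b lm_id)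
  have r2: "lin2 ra x (hu H2) = x" for x by (rule ra_unit2[OF mp nd ra_dual])
  have "A1_mul H1 H2 H' lt rt p ra (emb_hw H2 (bv (h,\<phi>))) (emb_hw H2 (bv (g,\<psi>))) =
        A1_mul H1 H2 H' lt rt p ra (tens (bv h) (tens (hu H2) (bv \<phi>))) (tens (bv g) (tens (hu H2) (bv \<psi>)))"
    by (simp only: e)
  also have "\<dots> = lin (\<lambda>(y1,y2). B (bv y1) (bv y2)) (dcp_cop H1 H2 (tens (bv g) (hu H2)))"
    unfolding A1_gen2 B_def by (simp only: case_prod_unfold)
  also have "\<dots> = lin (\<lambda>j. B (tens (bv (fst j)) (hu H2)) (tens (bv (snd j)) (hu H2))) (hc H1 g)"
    by (simp only: dcp_cop_unit[OF H2] lin_lin tens_lin_bil[OF b1 b2])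
  also have "\<dots> = lin (\<lambda>j. assoc_r (tens (tens (mul H1 (bv h) (bv (fst j))) (hu H2))
      (mul H' (lin (\<lambda>k. vsc (p (fst k) (snd j)) (bv (snd k))) (hc H' \<phi>)) (bv \<psi>)))) (hc H1 g)"
    unfolding B_def by (simp only: dcp_unit[OF H1 H2 mp] act1_gen2 r2)
  also have "\<dots> = emb_hw H2 (hw_mul H1 H' p (bv (h,\<phi>)) (bv (g,\<psi>)))"
    unfolding hw_mul_def by (simp add: push2 emb_hw_push emb_hw_vsc emb_hw_tens lin_tens case_prod_unfold)
  finally show ?thesis by simp
qed


lemma sum_keys_delta:
  "(\<Sum>m\<in>Poly_Mapping.keys (x::'i vec). Poly_Mapping.lookup x m * (if m = k then c else 0)) = Poly_Mapping.lookup x k * c"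
proof -
  have "(\<Sum>m\<in>Poly_Mapping.keys x. Poly_Mapping.lookup x m * (if m = k then c else 0)) =
        (\<Sum>m\<in>Poly_Mapping.keys x. if m = k then Poly_Mapping.lookup x m * c else 0)"
    by (rule sum.cong) auto
  also have "\<dots> = (if k \<in> Poly_Mapping.keys x then Poly_Mapping.lookup x k * c else 0)"
    by (simp add: sum.delta)
  also have "\<dots> = Poly_Mapping.lookup x k * c" by (auto simp: in_keys_iff)
  finally show ?thesis .
qed

lemma lookup_tens: "Poly_Mapping.lookup (tens X Y) (i, j) = Poly_Mapping.lookup X i * Poly_Mapping.lookup Y j"
proof -
  have inner: "Poly_Mapping.lookup (lin (\<lambda>b. bv (a, b)) Y) (i, j) = (if a = i then Poly_Mapping.lookup Y j else 0)" for a
  proof -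
    have "Poly_Mapping.lookup (lin (\<lambda>b. bv (a, b)) Y) (i, j) =
          (\<Sum>b\<in>Poly_Mapping.keys Y. Poly_Mapping.lookup Y b * (if b = j then (if a = i then 1 else 0) else 0))"
      unfolding lookup_lin lookup_bv by (rule sum.cong) auto
    also have "\<dots> = (if a = i then Poly_Mapping.lookup Y j else 0)" by (simp only: sum_keys_delta) simp
    finally show ?thesis .
  qed
  have "Poly_Mapping.lookup (tens X Y) (i, j) = (\<Sum>a\<in>Poly_Mapping.keys X. Poly_Mapping.lookup X a * (if a = i then Poly_Mapping.lookup Y j else 0))"
    unfolding tens_def lin2_def lookup_lin[of _ X] inner ..
  also have "\<dots> = Poly_Mapping.lookup X i * Poly_Mapping.lookup Y j" by (rule sum_keys_delta)
  finally show ?thesis .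
qed

lemma lookup_assoc: "Poly_Mapping.lookup (assoc_r W) (i, j, k) = Poly_Mapping.lookup W ((i, j), k)"
proof -
  have "Poly_Mapping.lookup (assoc_r W) (i, j, k) = (\<Sum>m\<in>Poly_Mapping.keys W. Poly_Mapping.lookup W m * (if m = ((i,j),k) then 1 else 0))"
    unfolding assoc_r_def lookup_lin lookup_bv by (rule sum.cong) (auto simp: case_prod_unfold prod_eq_iff lookup_bv)
  also have "\<dots> = Poly_Mapping.lookup W ((i, j), k)" by (simp only: sum_keys_delta) simp
  finally show ?thesis .
qed

lemma lookup_emb_hw: "Poly_Mapping.lookup (emb_hw H2 x) (i, k, j) = Poly_Mapping.lookup x (i, j) * Poly_Mapping.lookup (hu H2) k"
proof -
  have "Poly_Mapping.lookup (emb_hw H2 x) (i, k, j) = (\<Sum>m\<in>Poly_Mapping.keys x. Poly_Mapping.lookup x m * (if m = (i,j) then Poly_Mapping.lookup (hu H2) k else 0))"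
    unfolding emb_hw_def lookup_lin by (rule sum.cong) (auto simp: case_prod_unfold lookup_tens lookup_bv prod_eq_iff)
  also have "\<dots> = Poly_Mapping.lookup x (i, j) * Poly_Mapping.lookup (hu H2) k" by (rule sum_keys_delta)
  finally show ?thesis .
qed

lemma unit_nonzero:
  assumes "hopf_algebra H" shows "\<exists>k. Poly_Mapping.lookup (hu H) k \<noteq> 0"
proof (rule ccontr)
  assume "\<not> ?thesis"
  then have z: "hu H = 0" by (intro poly_mapping_eqI) simp
  obtain i :: 'a where True by simp
  have "mul H (hu H) (bv i) = bv i" using hopf_facts(2)[OF assms] .
  then have "bv i = (0 :: 'a vec)" unfolding z mul_def lin2_def by simp
  then have "Poly_Mapping.lookup (bv i) i = Poly_Mapping.lookup (0 :: 'a vec) i" by simp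
  then show False by (simp add: lookup_bv)
qed

lemma inj_by_lookup:
  fixes E :: "'i vec \<Rightarrow> 'k"
  assumes "\<And>x y. E x = E y \<Longrightarrow> (\<forall>m. Poly_Mapping.lookup x m * c = Poly_Mapping.lookup y m * c)" "c \<noteq> 0"
  shows "inj E"
proof (rule injI)
  fix x y assume "E x = E y"
  then have a: "\<forall>m. Poly_Mapping.lookup x m * c = Poly_Mapping.lookup y m * c" by (rule assms(1))
  show "x = y"
  proof (rule poly_mapping_eqI)
    fix m from a have "Poly_Mapping.lookup x m * c = Poly_Mapping.lookup y m * c" by blast
    then show "Poly_Mapping.lookup x m = Poly_Mapping.lookup y m" using assms(2) by simp
  qed
qed

lemma inj_emb_dcp: assumes "hopf_algebra H'" shows "inj (emb_dcp H')"
proof -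
  obtain k where k: "Poly_Mapping.lookup (hu H') k \<noteq> 0" using unit_nonzero[OF assms] by blast
  show ?thesis
  proof (rule inj_by_lookup[OF _ k])
    fix x y assume "emb_dcp H' x = emb_dcp H' y"
    then have "\<forall>i j. Poly_Mapping.lookup (emb_dcp H' x) (i,j,k) = Poly_Mapping.lookup (emb_dcp H' y) (i,j,k)" by simp
    then show "\<forall>m. Poly_Mapping.lookup x m * Poly_Mapping.lookup (hu H') k = Poly_Mapping.lookup y m * Poly_Mapping.lookup (hu H') k"
      by (simp add: emb_dcp_eq lookup_assoc lookup_tens)
  qed
qed

lemma inj_emb_bcp: assumes "hopf_algebra H1" shows "inj (emb_bcp H1)"
proof -
  obtain k where k: "Poly_Mapping.lookup (hu H1) k \<noteq> 0" using unit_nonzero[OF assms] by blast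
  show ?thesis
  proof (rule inj_by_lookup[OF _ k])
    fix x y assume "emb_bcp H1 x = emb_bcp H1 y"
    then have "\<forall>m. Poly_Mapping.lookup (emb_bcp H1 x) (k,m) = Poly_Mapping.lookup (emb_bcp H1 y) (k,m)" by simp
    then show "\<forall>m. Poly_Mapping.lookup x m * Poly_Mapping.lookup (hu H1) k = Poly_Mapping.lookup y m * Poly_Mapping.lookup (hu H1) k"
      by (simp add: emb_bcp_eq lookup_tens mult.commute)
  qed
qed

lemma inj_emb_hw: assumes "hopf_algebra H2" shows "inj (emb_hw H2)"
proof -
  obtain k where k: "Poly_Mapping.lookup (hu H2) k \<noteq> 0" using unit_nonzero[OF assms] by blast
  show ?thesis
  proof (rule inj_by_lookup[OF _ k])
    fix x y assume "emb_hw H2 x = emb_hw H2 y"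
    then have "\<forall>i j. Poly_Mapping.lookup (emb_hw H2 x) (i,k,j) = Poly_Mapping.lookup (emb_hw H2 y) (i,k,j)" by simp
    then show "\<forall>m. Poly_Mapping.lookup x m * Poly_Mapping.lookup (hu H2) k = Poly_Mapping.lookup y m * Poly_Mapping.lookup (hu H2) k"
      by (simp add: lookup_emb_hw)
  qed
qed


theorem mainTheorem1:
  fixes H1 :: "'a hopf" and H2 :: "'b hopf" and H' :: "'c hopf"
    and lt :: "'b \<Rightarrow> 'a \<Rightarrow> 'a vec"   \<comment> \<open>a \<triangleright> h\<close>
    and rt :: "'b \<Rightarrow> 'a \<Rightarrow> 'b vec"   \<comment> \<open>a \<triangleleft> h\<close>
    and p :: "'c \<Rightarrow> 'a \<Rightarrow> complex"   \<comment> \<open>\<langle>\<phi>, h\<rangle>\<close>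
    and co :: "'b \<Rightarrow> ('c \<times> 'b) vec"  \<comment> \<open>a \<mapsto> a(0) \<otimes> a(1)\<close>
    and ra :: "'c \<Rightarrow> 'b \<Rightarrow> 'c vec"   \<comment> \<open>\<phi> \<triangleleft> a\<close>
  assumes H1: "hopf_algebra H1" and H2: "hopf_algebra H2" and H': "hopf_algebra H'"
    and mp: "matched_pair H1 H2 lt rt"
    and dp: "dual_pairing H' H1 p" and nd: "nondegenerate p"
    and coass: "\<forall>a. assoc_r (tmap (cop H') id (lin co a)) = tmap id (lin co) (lin co a)"
    and counit: "\<forall>a. lin (\<lambda>(c, b). vsc (he H' c) (bv b)) (lin co a) = a"
    and rt_co: "\<forall>a h. lin2 rt a h = lin (\<lambda>(c, b). vsc (pair p (bv c) h) (bv b)) (lin co a)"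
    and ra_dual: "\<forall>\<phi> a h. pair p (lin2 ra \<phi> a) h = pair p \<phi> (lin2 lt a h)"
  shows
    "(\<forall>u v. A1_mul H1 H2 H' lt rt p ra u v = A2_mul H1 H2 H' lt p ra co u v) \<and>
     inj (emb_dcp H') \<and>
     (\<forall>x y. emb_dcp H' (dcp_mul H1 H2 lt rt x y) =
            A2_mul H1 H2 H' lt p ra co (emb_dcp H' x) (emb_dcp H' y)) \<and>
     emb_dcp H' (tens (hu H1) (hu H2)) = tens (hu H1) (tens (hu H2) (hu H')) \<and>
     inj (emb_bcp H1) \<and>
     (\<forall>x y. emb_bcp H1 (bcp_mul H2 H' ra x y) =
            A2_mul H1 H2 H' lt p ra co (emb_bcp H1 x) (emb_bcp H1 y)) \<and>
     emb_bcp H1 (tens (hu H2) (hu H')) = tens (hu H1) (tens (hu H2) (hu H')) \<and>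
     inj (emb_hw H2) \<and>
     (\<forall>x y. emb_hw H2 (hw_mul H1 H' p x y) =
            A2_mul H1 H2 H' lt p ra co (emb_hw H2 x) (emb_hw H2 y)) \<and>
     emb_hw H2 (tens (hu H1) (hu H')) = tens (hu H1) (tens (hu H2) (hu H'))"
proof -
  have A12: "A1_mul H1 H2 H' lt rt p ra u v = A2_mul H1 H2 H' lt p ra co u v" for u v
  proof (rule bil_eqI[where ?B1.0 = "A1_mul H1 H2 H' lt rt p ra" and ?B2.0 = "A2_mul H1 H2 H' lt p ra co"])
    show "lin_map (\<lambda>x. A1_mul H1 H2 H' lt rt p ra x y)" for y by (rule lm_A1_1[OF lm_id])
    show "lin_map (\<lambda>y. A1_mul H1 H2 H' lt rt p ra x y)" for x by (rule lm_A1_2[OF lm_id])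
    show "lin_map (\<lambda>x. A2_mul H1 H2 H' lt p ra co x y)" for y by (rule lm_A2_1[OF lm_id])
    show "lin_map (\<lambda>y. A2_mul H1 H2 H' lt p ra co x y)" for x by (rule lm_A2_2[OF lm_id])
    show "A1_mul H1 H2 H' lt rt p ra (bv i) (bv j) = A2_mul H1 H2 H' lt p ra co (bv i) (bv j)" for i j
    proof -
      obtain h a \<phi> where i: "i = (h, a, \<phi>)" by (cases i) auto
      obtain g b \<psi> where j: "j = (g, b, \<psi>)" by (cases j) auto
      show ?thesis unfolding i j by (rule main_bv[OF H1 dp rt_co])
    qed
  qed
  have D: "emb_dcp H' (dcp_mul H1 H2 lt rt x y) = A2_mul H1 H2 H' lt p ra co (emb_dcp H' x) (emb_dcp H' y)" for x y
  proof (rule bil_eqI[where ?B1.0 = "\<lambda>x y. emb_dcp H' (dcp_mul H1 H2 lt rt x y)" and ?B2.0 = "\<lambda>x y. A2_mul H1 H2 H' lt p ra co (emb_dcp H' x) (emb_dcp H' y)"])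
    show "lin_map (\<lambda>x. emb_dcp H' (dcp_mul H1 H2 lt rt x y))" for y by (intro lm_emb_dcp lm_dcp1 lm_id)
    show "lin_map (\<lambda>y. emb_dcp H' (dcp_mul H1 H2 lt rt x y))" for x by (intro lm_emb_dcp lm_dcp2 lm_id)
    show "lin_map (\<lambda>x. A2_mul H1 H2 H' lt p ra co (emb_dcp H' x) (emb_dcp H' y))" for y by (intro lm_A2_1 lm_emb_dcp lm_id)
    show "lin_map (\<lambda>y. A2_mul H1 H2 H' lt p ra co (emb_dcp H' x) (emb_dcp H' y))" for x by (intro lm_A2_2 lm_emb_dcp lm_id)
    show "emb_dcp H' (dcp_mul H1 H2 lt rt (bv i) (bv j)) = A2_mul H1 H2 H' lt p ra co (emb_dcp H' (bv i)) (emb_dcp H' (bv j))" for i j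
    proof -
      obtain h a where i: "i = (h, a)" by (cases i)
      obtain g b where j: "j = (g, b)" by (cases j)
      show ?thesis unfolding i j A12[symmetric] by (rule dcp_basis[OF H1 H2 H' mp dp nd ra_dual])
    qed
  qed
  have B: "emb_bcp H1 (bcp_mul H2 H' ra x y) = A2_mul H1 H2 H' lt p ra co (emb_bcp H1 x) (emb_bcp H1 y)" for x y
  proof (rule bil_eqI[where ?B1.0 = "\<lambda>x y. emb_bcp H1 (bcp_mul H2 H' ra x y)" and ?B2.0 = "\<lambda>x y. A2_mul H1 H2 H' lt p ra co (emb_bcp H1 x) (emb_bcp H1 y)"])
    show "lin_map (\<lambda>x. emb_bcp H1 (bcp_mul H2 H' ra x y))" for y by (intro lm_emb_bcp lm_bcp1 lm_id)
    show "lin_map (\<lambda>y. emb_bcp H1 (bcp_mul H2 H' ra x y))" for x by (intro lm_emb_bcp lm_bcp2 lm_id)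
    show "lin_map (\<lambda>x. A2_mul H1 H2 H' lt p ra co (emb_bcp H1 x) (emb_bcp H1 y))" for y by (intro lm_A2_1 lm_emb_bcp lm_id)
    show "lin_map (\<lambda>y. A2_mul H1 H2 H' lt p ra co (emb_bcp H1 x) (emb_bcp H1 y))" for x by (intro lm_A2_2 lm_emb_bcp lm_id)
    show "emb_bcp H1 (bcp_mul H2 H' ra (bv i) (bv j)) = A2_mul H1 H2 H' lt p ra co (emb_bcp H1 (bv i)) (emb_bcp H1 (bv j))" for i j
    proof -
      obtain a \<phi> where i: "i = (a, \<phi>)" by (cases i)
      obtain b \<psi> where j: "j = (b, \<psi>)" by (cases j)
      show ?thesis unfolding i j by (rule bcp_basis[OF H1 H2 H' mp dp counit])
    qed
  qed
  have W: "emb_hw H2 (hw_mul H1 H' p x y) = A2_mul H1 H2 H' lt p ra co (emb_hw H2 x) (emb_hw H2 y)" for x y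
  proof (rule bil_eqI[where ?B1.0 = "\<lambda>x y. emb_hw H2 (hw_mul H1 H' p x y)" and ?B2.0 = "\<lambda>x y. A2_mul H1 H2 H' lt p ra co (emb_hw H2 x) (emb_hw H2 y)"])
    show "lin_map (\<lambda>x. emb_hw H2 (hw_mul H1 H' p x y))" for y by (intro lm_emb_hw lm_hw1 lm_id)
    show "lin_map (\<lambda>y. emb_hw H2 (hw_mul H1 H' p x y))" for x by (intro lm_emb_hw lm_hw2 lm_id)
    show "lin_map (\<lambda>x. A2_mul H1 H2 H' lt p ra co (emb_hw H2 x) (emb_hw H2 y))" for y by (intro lm_A2_1 lm_emb_hw lm_id)
    show "lin_map (\<lambda>y. A2_mul H1 H2 H' lt p ra co (emb_hw H2 x) (emb_hw H2 y))" for x by (intro lm_A2_2 lm_emb_hw lm_id)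
    show "emb_hw H2 (hw_mul H1 H' p (bv i) (bv j)) = A2_mul H1 H2 H' lt p ra co (emb_hw H2 (bv i)) (emb_hw H2 (bv j))" for i j
    proof -
      obtain h \<phi> where i: "i = (h, \<phi>)" by (cases i)
      obtain g \<psi> where j: "j = (g, \<psi>)" by (cases j)
      show ?thesis unfolding i j A12[symmetric] by (rule hw_basis[OF H1 H2 H' mp nd ra_dual])
    qed
  qed
  have u1: "emb_dcp H' (tens (hu H1) (hu H2)) = tens (hu H1) (tens (hu H2) (hu H'))"
    by (simp only: emb_dcp_eq assoc_tens)
  have u2: "emb_bcp H1 (tens (hu H2) (hu H')) = tens (hu H1) (tens (hu H2) (hu H'))"
    by (rule emb_bcp_eq)
  have u3: "emb_hw H2 (tens (hu H1) (hu H')) = tens (hu H1) (tens (hu H2) (hu H'))"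
    by (rule emb_hw_tens)
  show ?thesis
    using A12 D B W u1 u2 u3 inj_emb_dcp[OF H'] inj_emb_bcp[OF H1] inj_emb_hw[OF H2] by blast
qed


end
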